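(* For every $n$ and $w$ there exists an $(n,w)$-approximate swapper circuit with $O(n)$ generalized boolean gates, $O(n)$ $w$-selector gates, and depth $O(1)$.
   Context: An operational circuit consists of generalized boolean gates (constant fan-in, constant fan-out, arbitrary truth table) and $w$-selector gates (take a flag bit and two $w$-bit strings and output one string chosen by the flag). An $(n,w)$-approximate swapper receives an array $\mathbf I$ of $n$ elements, each with a $w$-bit payload and a label in $\{\mathtt{blue},\mathtt{red},\bot\}$ (elements labeled blue or red are colored); let $n_{\rm red},n_{\rm blue}$ be the numbers of red and blue elements. It must output a legal swap $\mathbf O$ of $\mathbf I$ in which at most $n/128+|n_{\rm red}-n_{\rm blue}|$ elements remain colored. $\mathbf O$ is a legal swap of $\mathbf I$ if there are pairwise distinct indices $i_1,j_1,\dots,i_\ell,j_\ell$ such that for each $t$, $\mathbf I[i_t]$ and $\mathbf I[j_t]$ are colored with opposite colors, and $\mathbf O$ is obtained from $\mathbf I$ by swapping $\mathbf I[i_t]$ with $\mathbf I[j_t]$ for all $t$, all swapped elements becoming uncolored (label $\bot$). *)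

theory Defs
  imports Main "HOL.Real"
begin

datatype label = Blue | Red | Bot

type_synonym elem = "label \<times> bool list"   \<comment> \<open>(label, w-bit payload)\<close>

definition colored :: "elem \<Rightarrow> bool" where
  "colored e \<longleftrightarrow> fst e \<noteq> Bot"

definition opposite :: "label \<Rightarrow> label \<Rightarrow> bool" where
  "opposite a b \<longleftrightarrow> (a = Blue \<and> b = Red) \<or> (a = Red \<and> b = Blue)"

definition legal_swap :: "elem list \<Rightarrow> elem list \<Rightarrow> bool" where
  "legal_swap I Out \<longleftrightarrow> length Out = length I \<and>
     (\<exists>P :: (nat \<times> nat) list.
        distinct (concat (map (\<lambda>(i,j). [i,j]) P)) \<and>
        (\<forall>(i,j)\<in>set P. i < length I \<and> j < length I \<and> opposite (fst (I!i)) (fst (I!j)) \<and>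
             Out!i = (Bot, snd (I!j)) \<and> Out!j = (Bot, snd (I!i))) \<and>
        (\<forall>k<length I. k \<notin> fst ` set P \<and> k \<notin> snd ` set P \<longrightarrow> Out!k = I!k))"

definition num_label :: "label \<Rightarrow> elem list \<Rightarrow> nat" where
  "num_label l A = card {i. i < length A \<and> fst (A!i) = l}"

definition num_colored :: "elem list \<Rightarrow> nat" where
  "num_colored A = card {i. i < length A \<and> colored (A!i)}"

definition approx_swap_ok :: "elem list \<Rightarrow> elem list \<Rightarrow> bool" where
  "approx_swap_ok I Out \<longleftrightarrow> legal_swap I Out \<and>
     real (num_colored Out) \<le> real (length I) / 128
        + \<bar>real (num_label Red I) - real (num_label Blue I)\<bar>"

text \<open>A circuit is a straight-line
  program: the wires 0..3n-1 are the inputs (for element i: wire 3i = "is colored" bit,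
  wire 3i+1 = "is red" bit, wire 3i+2 = w-bit payload), and the k-th gate produces wire
  3n+k.\<close>

datatype val = VB bool | VW "bool list"

datatype gate = BoolG "nat list" "bool list \<Rightarrow> bool" | SelG nat nat nat

datatype kind = KBit | KWord

fun getb :: "val \<Rightarrow> bool" where
  "getb (VB b) = b" | "getb (VW _) = False"

fun getw :: "val \<Rightarrow> bool list" where
  "getw (VW s) = s" | "getw (VB _) = []"

fun gate_ins :: "gate \<Rightarrow> nat list" where
  "gate_ins (BoolG ins f) = ins" | "gate_ins (SelG a x y) = [a, x, y]"

fun gate_kind :: "gate \<Rightarrow> kind" where
  "gate_kind (BoolG _ _) = KBit" | "gate_kind (SelG _ _ _) = KWord"

fun is_bool_gate :: "gate \<Rightarrow> bool" where
  "is_bool_gate (BoolG _ _) = True" | "is_bool_gate (SelG _ _ _) = False"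

fun eval_gate :: "val list \<Rightarrow> gate \<Rightarrow> val" where
  "eval_gate vs (BoolG ins f) = VB (f (map (\<lambda>i. getb (vs!i)) ins))"
| "eval_gate vs (SelG a x y) = (if getb (vs!a) then vs!y else vs!x)"

text \<open>A circuit on n elements: list of gates and, for each output element, the triple
  of wires (colored bit, red bit, payload string).\<close>
record circuit =
  gates :: "gate list"
  outs :: "(nat \<times> nat \<times> nat) list"

definition input_kinds :: "nat \<Rightarrow> kind list" where
  "input_kinds n = concat (replicate n [KBit, KBit, KWord])"

definition wire_kinds :: "nat \<Rightarrow> circuit \<Rightarrow> kind list" where
  "wire_kinds n C = input_kinds n @ map gate_kind (gates C)"

fun gate_typed :: "kind list \<Rightarrow> gate \<Rightarrow> bool" where
  "gate_typed ks (BoolG ins f) \<longleftrightarrow> (\<forall>i\<in>set ins. i < length ks \<and> ks!i = KBit)"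
| "gate_typed ks (SelG a x y) \<longleftrightarrow> a < length ks \<and> x < length ks \<and> y < length ks \<and>
      ks!a = KBit \<and> ks!x = KWord \<and> ks!y = KWord"

definition wf_circuit :: "nat \<Rightarrow> circuit \<Rightarrow> bool" where
  "wf_circuit n C \<longleftrightarrow>
     (\<forall>k<length (gates C). gate_typed (take (3*n + k) (wire_kinds n C)) (gates C ! k)) \<and>
     length (outs C) = n \<and>
     (\<forall>(a,b,p)\<in>set (outs C). a < length (wire_kinds n C) \<and> b < length (wire_kinds n C) \<and>
        p < length (wire_kinds n C) \<and> wire_kinds n C ! a = KBit \<and>
        wire_kinds n C ! b = KBit \<and> wire_kinds n C ! p = KWord)"

definition encode_elem :: "elem \<Rightarrow> val list" where
  "encode_elem e = [VB (fst e \<noteq> Bot), VB (fst e = Red), VW (snd e)]"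

definition decode_label :: "bool \<Rightarrow> bool \<Rightarrow> label" where
  "decode_label c r = (if \<not> c then Bot else if r then Red else Blue)"

definition eval_wires :: "circuit \<Rightarrow> elem list \<Rightarrow> val list" where
  "eval_wires C I = fold (\<lambda>g vs. vs @ [eval_gate vs g]) (gates C) (concat (map encode_elem I))"

definition run_circuit :: "circuit \<Rightarrow> elem list \<Rightarrow> elem list" where
  "run_circuit C I = (let vs = eval_wires C I in
     map (\<lambda>(a,b,p). (decode_label (getb (vs!a)) (getb (vs!b)), getw (vs!p))) (outs C))"

definition num_bool_gates :: "circuit \<Rightarrow> nat" where
  "num_bool_gates C = length (filter is_bool_gate (gates C))"

definition num_sel_gates :: "circuit \<Rightarrow> nat" where
  "num_sel_gates C = length (filter (\<lambda>g. \<not> is_bool_gate g) (gates C))"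

definition max_fan_in :: "circuit \<Rightarrow> nat" where
  "max_fan_in C = Max (insert 0 (set (map (\<lambda>g. length (gate_ins g)) (gates C))))"

definition fan_out :: "circuit \<Rightarrow> nat \<Rightarrow> nat" where
  "fan_out C v = length (filter (\<lambda>u. u = v) (concat (map gate_ins (gates C))))
     + length (filter (\<lambda>u. u = v) (concat (map (\<lambda>(a,b,p). [a,b,p]) (outs C))))"

definition max_bool_fan_out :: "nat \<Rightarrow> circuit \<Rightarrow> nat" where
  "max_bool_fan_out n C = Max (insert 0
     {fan_out C (3*n + k) | k. k < length (gates C) \<and> is_bool_gate (gates C ! k)})"

definition wire_depths :: "nat \<Rightarrow> circuit \<Rightarrow> nat list" where
  "wire_depths n C = fold (\<lambda>g ds. ds @ [1 + Max (insert 0 (set (map (\<lambda>i. ds!i) (gate_ins g))))])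
      (gates C) (replicate (3*n) 0)"

definition depth :: "nat \<Rightarrow> circuit \<Rightarrow> nat" where
  "depth n C = Max (insert 0 (set (wire_depths n C)))"

definition is_approx_swapper :: "nat \<Rightarrow> nat \<Rightarrow> circuit \<Rightarrow> bool" where
  "is_approx_swapper n w C \<longleftrightarrow> wf_circuit n C \<and>
     (\<forall>I :: elem list. length I = n \<and> (\<forall>e\<in>set I. length (snd e) = w) \<longrightarrow>
        approx_swap_ok I (run_circuit C I))"

end

theory Submission
  imports Defs "HOL-Library.FuncSet" Complex_Main
begin

lemma card_Bad:
  fixes A B :: "nat set" and n d :: nat
  assumes "A \<subseteq> {..<n}" "B \<subseteq> {..<n}" "card A = m" "card B = m"
  shows "card (PiE ({..<d}\<times>{..<n}) (\<lambda>(k,a). if a \<in> A then {..<n} - B else {..<n}))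
     = (n-m)^(d*m) * n^(d*(n-m))"
proof -
  have fin: "finite ({..<d}\<times>{..<n})" by simp
  have "card (PiE ({..<d}\<times>{..<n}) (\<lambda>(k,a). if a \<in> A then {..<n} - B else {..<n}))
     = (\<Prod>x\<in>{..<d}\<times>{..<n}. card (if snd x \<in> A then {..<n} - B else {..<n}))"
    by (subst card_PiE[OF fin]) (auto intro!: prod.cong simp: case_prod_beta)
  also have "\<dots> = (\<Prod>x\<in>{..<d}\<times>{..<n}. (if snd x \<in> A then n - m else n))"
    using assms by (intro prod.cong) (auto simp: card_Diff_subset finite_subset)
  also have "\<dots> = (n-m)^card ({..<d}\<times>{..<n} \<inter> {x. snd x \<in> A}) * n ^ card ({..<d}\<times>{..<n} \<inter> - {x. snd x \<in> A})"
    by (subst prod.If_cases) auto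
  also have "{..<d}\<times>{..<n} \<inter> {x. snd x \<in> A} = {..<d} \<times> A" using assms by auto
  also have "{..<d}\<times>{..<n} \<inter> - {x. snd x \<in> A} = {..<d} \<times> ({..<n} - A)" by auto
  finally show ?thesis using assms by (simp add: card_cartesian_product card_Diff_subset finite_subset)
qed


lemma key_ineq:
  fixes n m d :: nat
  assumes n: "n \<ge> 2048" and m: "m = n div 1024 + 1" and d: "d = 4*1024^2"
  shows "4^n * (n-m)^(d*m) < n^(d*m)"
proof -
  have m1: "1024 * m \<ge> n" using m by linarith
  have mn: "m < n" using m n by linarith
  define x where "x = real m / real n"
  have npos: "real n > 0" using n by simp
  have x0: "0 \<le> x" "x \<le> 1" using mn npos by (auto simp: x_def)
  have "real (n - m) = real n * (1 - x)" using mn npos by (simp add: x_def of_nat_diff field_simps)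
  hence "real ((n-m)^(d*m)) = real n ^(d*m) * (1-x)^(d*m)" by (simp add: power_mult_distrib)
  also have "(1-x)^(d*m) \<le> exp (-x) ^ (d*m)"
    using x0 by (intro power_mono) (auto simp: exp_ge_add_one_self[of "-x", simplified])
  also have "exp (-x) ^ (d*m) = exp (- (x * real (d*m)))" by (simp add: exp_of_nat_mult[symmetric] mult.commute)
  also have "x * real (d*m) \<ge> 4 * real n"
  proof -
    have "4 * real n = real d * (real n / 1024) / 1024" using d by simp
    also have "\<dots> \<le> real d * real m / 1024"
      using m1 by (intro divide_right_mono mult_left_mono) auto
    also have "real d * real m / 1024 = real d * real m * (real n / 1024) / real n" using npos by simp
    also have "\<dots> \<le> real d * real m * real m / real n"
      using m1 npos by (intro divide_right_mono mult_left_mono) auto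
    also have "\<dots> = x * real (d*m)" by (simp add: x_def)
    finally show ?thesis .
  qed
  hence "exp (- (x * real (d*m))) \<le> exp (- (4 * real n))" by simp
  finally have A: "real ((n-m)^(d*m)) \<le> real n ^(d*m) * exp (- (4 * real n))"
    by (simp add: mult_left_mono)
  have e4: "exp (4::real) \<ge> 5" using exp_ge_add_one_self[of "4::real"] by simp
  have "exp (4 * real n) = exp 4 ^ n" by (simp add: exp_of_nat_mult[symmetric] mult.commute)
  also have "exp (4::real) ^ n > 4 ^ n" using e4 n by (intro power_strict_mono) auto
  finally have B: "4^n * exp (- (4 * real n)) < 1" by (simp add: exp_minus field_simps)
  have "real (4^n * (n-m)^(d*m)) = 4^n * real ((n-m)^(d*m))" by simp
  also have "\<dots> \<le> 4^n * (real n ^(d*m) * exp (- (4 * real n)))" using A by simp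
  also have "\<dots> = real n ^ (d*m) * (4^n * exp (- (4 * real n)))" by simp
  also have "\<dots> < real n ^ (d*m)" using B npos by simp
  finally have "real (4^n * (n-m)^(d*m)) < real (n ^ (d*m))" by simp
  thus ?thesis by (simp only: of_nat_less_iff)
qed


lemma exists_g:
  fixes n m d :: nat
  assumes n: "n \<ge> 2048" and m: "m = n div 1024 + 1" and d: "d = 4*1024^2"
  shows "\<exists>g \<in> PiE ({..<d}\<times>{..<n}) (\<lambda>_. {..<n}). \<forall>A B. A \<subseteq> {..<n} \<longrightarrow> B \<subseteq> {..<n} \<longrightarrow>
     card A = m \<longrightarrow> card B = m \<longrightarrow> (\<exists>k<d. \<exists>a\<in>A. g (k,a) \<in> B)"
proof -
  define I where "I = {..<d}\<times>{..<n}"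
  define U where "U = PiE I (\<lambda>_. {..<n})"
  define Bad where "Bad = (\<lambda>(A::nat set,B::nat set). PiE I (\<lambda>(k,a). if a \<in> A then {..<n} - B else {..<n}))"
  define S where "S = {A. A \<subseteq> {..<n} \<and> card A = m}"
  have finI: "finite I" by (simp add: I_def)
  have cU: "card U = n^(d*n)" unfolding U_def by (subst card_PiE[OF finI]) (simp add: I_def card_cartesian_product)
  have cS: "card S \<le> 2^n"
  proof -
    have "S \<subseteq> Pow {..<n}" by (auto simp: S_def)
    hence "card S \<le> card (Pow {..<n})" by (intro card_mono) auto
    thus ?thesis by (simp add: card_Pow)
  qed
  have finS: "finite S" by (rule finite_subset[of _ "Pow {..<n}"]) (auto simp: S_def)
  have cBad: "card (Bad p) = (n-m)^(d*m) * n^(d*(n-m))" if "p \<in> S \<times> S" for p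
    using that card_Bad[of "fst p" n "snd p" m d] by (auto simp: Bad_def S_def I_def case_prod_beta)
  have "card (\<Union>p\<in>S\<times>S. Bad p) \<le> (\<Sum>p\<in>S\<times>S. card (Bad p))" by (rule card_UN_le) (simp add: finS)
  also have "\<dots> = card (S\<times>S) * ((n-m)^(d*m) * n^(d*(n-m)))" using cBad by simp
  also have "\<dots> \<le> 4^n * ((n-m)^(d*m) * n^(d*(n-m)))"
  proof -
    have "card (S\<times>S) \<le> 2^n * 2^n" using cS by (simp add: card_cartesian_product mult_le_mono)
    also have "(2::nat)^n * 2^n = 4^n" by (simp add: power_mult_distrib[symmetric])
    finally show ?thesis by simp
  qed
  also have "\<dots> = (4^n * (n-m)^(d*m)) * n^(d*(n-m))" by simp
  also have "\<dots> < n^(d*m) * n^(d*(n-m))"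
    using key_ineq[OF n m d] n by simp
  also have "\<dots> = n^(d*n)"
  proof -
    have "m \<le> n" using m n by linarith
    hence "d*m + d*(n-m) = d*n" by (metis add_diff_inverse_nat diff_add_inverse2 distrib_left not_less)
    thus ?thesis by (metis power_add)
  qed
  finally have lt: "card (\<Union>p\<in>S\<times>S. Bad p) < card U" using cU by simp
  have finBad: "finite (Bad p)" for p
    unfolding Bad_def by (cases p) (auto intro!: finite_PiE[OF finI] split: prod.splits)
  have finU: "finite U" by (simp add: U_def finI finite_PiE)
  have "\<not> U \<subseteq> (\<Union>p\<in>S\<times>S. Bad p)"
  proof
    assume "U \<subseteq> (\<Union>p\<in>S\<times>S. Bad p)"
    hence "card U \<le> card (\<Union>p\<in>S\<times>S. Bad p)"
      by (intro card_mono finite_UN_I) (auto intro!: finS finBad)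
    thus False using lt by simp
  qed
  then obtain g where gU: "g \<in> U" and gB: "\<And>p. p \<in> S\<times>S \<Longrightarrow> g \<notin> Bad p" by blast
  show ?thesis
  proof (intro bexI[of _ g] allI impI)
    show "g \<in> PiE ({..<d}\<times>{..<n}) (\<lambda>_. {..<n})" using gU by (simp add: U_def I_def)
    fix A B assume h: "A \<subseteq> {..<n}" "B \<subseteq> {..<n}" "card A = m" "card B = m"
    hence "(A,B) \<in> S\<times>S" by (simp add: S_def)
    hence "g \<notin> Bad (A,B)" by (rule gB)
    moreover have "g \<in> extensional I" using gU by (simp add: U_def PiE_def)
    ultimately obtain x where x: "x \<in> I" "g x \<notin> (if snd x \<in> A then {..<n} - B else {..<n})"
      by (auto simp: Bad_def PiE_def Pi_def case_prod_beta)
    have "g x \<in> {..<n}" using gU x(1) by (auto simp: U_def)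
    with x show "\<exists>k<d. \<exists>a\<in>A. g (k,a) \<in> B"
      by (cases x) (auto simp: I_def split: if_splits)
  qed
qed


definition graph_ok :: "nat \<Rightarrow> nat \<Rightarrow> (nat \<Rightarrow> nat \<Rightarrow> nat) \<Rightarrow> bool" where
  "graph_ok n D N \<longleftrightarrow> (\<forall>i<n. \<forall>k<D. N i k < n) \<and> (\<forall>i<n. \<forall>k<D. \<exists>k'<D. N (N i k) k' = i) \<and>
     (\<forall>A B. A \<subseteq> {..<n} \<longrightarrow> B \<subseteq> {..<n} \<longrightarrow> A \<inter> B = {} \<longrightarrow> n < 512 * card A \<longrightarrow> n < 512 * card B
        \<longrightarrow> (\<exists>a\<in>A. \<exists>k<D. N a k \<in> B))"

definition dd :: nat where "dd = 4*1024^2"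
definition DD :: nat where "DD = dd + 2048 * dd"

lemma graph_small:
  assumes "n \<le> D"
  shows "graph_ok n D (\<lambda>i k. k mod n)"
  unfolding graph_ok_def
proof (intro conjI allI impI)
  fix i k assume "i < n" "k < D" thus "k mod n < n" by simp
next
  fix i k assume "i < n" "k < D" thus "\<exists>k'<D. (k' mod n) = i"
    using assms by (intro exI[of _ i]) auto
next
  fix A B assume h: "A \<subseteq> {..<n}" "B \<subseteq> {..<n}" "A \<inter> B = {}" "n < 512 * card A" "n < 512 * card B"
  from h(4) have "A \<noteq> {}" by auto
  then obtain a where a: "a \<in> A" by auto
  from h(5) have "B \<noteq> {}" by auto
  then obtain b where b: "b \<in> B" by auto
  have "b < n" using b h(2) by auto
  thus "\<exists>a\<in>A. \<exists>k<D. k mod n \<in> B" using a b assms by (intro bexI[of _ a] exI[of _ b]) auto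
qed

lemma graph_large:
  assumes n: "n \<ge> 2048"
  shows "\<exists>N. graph_ok n DD N"
proof -
  define d where "d = dd"
  define m where "m = n div 1024 + 1"
  obtain g where gP: "g \<in> PiE ({..<d}\<times>{..<n}) (\<lambda>_. {..<n})" and
    gE: "\<And>A B. A \<subseteq> {..<n} \<Longrightarrow> B \<subseteq> {..<n} \<Longrightarrow> card A = m \<Longrightarrow> card B = m \<Longrightarrow> (\<exists>k<d. \<exists>a\<in>A. g (k,a) \<in> B)"
    using exists_g[OF n m_def] by (auto simp: d_def dd_def)
  have grng: "g (k,i) < n" if "k < d" "i < n" for k i using gP that by auto
  define In where "In = (\<lambda>j. {p \<in> {..<d}\<times>{..<n}. g p = j})"
  define H where "H = {j. j < n \<and> card (In j) > 2048 * d}"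
  define Lin where "Lin = (\<lambda>j. SOME xs. set xs = In j \<and> distinct xs)"
  have finIn: "finite (In j)" for j by (simp add: In_def)
  have LinP: "set (Lin j) = In j \<and> distinct (Lin j)" for j
    unfolding Lin_def by (rule someI_ex) (rule finite_distinct_list[OF finIn])
  have setLin: "set (Lin j) = In j" for j using LinP by blast
  have lenLin: "length (Lin j) = card (In j)" for j using LinP[of j] distinct_card by metis
  define N where "N = (\<lambda>i k. if k < d then (if i \<notin> H \<and> g (k,i) \<notin> H then g (k,i) else i)
        else (if i \<notin> H \<and> k - d < length (Lin i) \<and> snd (Lin i ! (k-d)) \<notin> H then snd (Lin i ! (k-d)) else i))"
  have DDd: "DD = d + 2048 * d" by (simp add: DD_def d_def)
  have cH: "card H * 2048 \<le> n"
  proof -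
    have "(\<Sum>j<n. card (In j)) = card (\<Union>j<n. In j)"
      by (rule card_UN_disjoint[symmetric]) (auto simp: finIn In_def)
    also have "(\<Union>j<n. In j) = {..<d}\<times>{..<n}" using grng by (auto simp: In_def)
    finally have S: "(\<Sum>j<n. card (In j)) = d * n" by (simp add: card_cartesian_product)
    have "card H * (2048 * d) \<le> (\<Sum>j\<in>H. card (In j))"
      using sum_mono[of H "\<lambda>_. 2048*d" "\<lambda>j. card (In j)"] by (auto simp: H_def)
    also have "\<dots> \<le> (\<Sum>j<n. card (In j))" by (rule sum_mono2) (auto simp: H_def)
    finally have "card H * 2048 * d \<le> n * d" using S by (simp add: mult.commute mult.left_commute)
    moreover have "d > 0" by (simp add: d_def dd_def)
    ultimately show ?thesis by simp
  qed
  have "graph_ok n DD N"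
    unfolding graph_ok_def
  proof (intro conjI allI impI)
    fix i k assume i: "i < n" and k: "k < DD"
    show "N i k < n"
    proof (cases "k < d")
      case True thus ?thesis using i grng by (auto simp: N_def)
    next
      case False
      { assume l: "k - d < length (Lin i)"
        hence "Lin i ! (k-d) \<in> In i" using setLin nth_mem by metis
        hence "snd (Lin i ! (k-d)) < n" by (auto simp: In_def) }
      thus ?thesis using False i by (auto simp: N_def)
    qed
    show "\<exists>k'<DD. N (N i k) k' = i"
    proof (cases "N i k = i")
      case True thus ?thesis using k by auto
    next
      case ne: False
      show ?thesis
      proof (cases "k < d")
        case True
        with ne have h: "i \<notin> H" "g (k,i) \<notin> H" "N i k = g (k,i)" by (auto simp: N_def split: if_splits)
        have "(k,i) \<in> In (g (k,i))" using True i by (auto simp: In_def)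
        then obtain l where l: "l < length (Lin (g (k,i)))" "Lin (g (k,i)) ! l = (k,i)"
          by (metis in_set_conv_nth setLin)
        have "card (In (g (k,i))) \<le> 2048 * d" using h(2) grng[OF True i] by (auto simp: H_def)
        hence "d + l < DD" using l(1) lenLin DDd by simp
        moreover have "N (g (k,i)) (d + l) = i" using h l by (simp add: N_def)
        ultimately show ?thesis using h(3) by auto
      next
        case False
        with ne have h: "i \<notin> H" "k - d < length (Lin i)" "snd (Lin i ! (k-d)) \<notin> H"
          "N i k = snd (Lin i ! (k-d))" by (auto simp: N_def split: if_splits)
        obtain k' i' where p: "Lin i ! (k-d) = (k',i')" by fastforce
        have "(k',i') \<in> In i" using h(2) p setLin nth_mem by metis
        hence "k' < d" "g (k',i') = i" by (auto simp: In_def)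
        hence "N i' k' = i" using h p by (simp add: N_def)
        thus ?thesis using h(4) p \<open>k' < d\<close> DDd by (intro exI[of _ k']) auto
      qed
    qed
  next
    fix A B assume h: "A \<subseteq> {..<n}" "B \<subseteq> {..<n}" "A \<inter> B = {}" "n < 512 * card A" "n < 512 * card B"
    have big: "m \<le> card (X - H)" if "X \<subseteq> {..<n}" "n < 512 * card X" for X
    proof -
      have finH: "finite H" by (rule finite_subset[of _ "{..<n}"]) (auto simp: H_def)
      have "card X \<le> card ((X - H) \<union> H)" using finH that(1)
        by (intro card_mono) (auto intro: finite_subset)
      also have "\<dots> \<le> card (X - H) + card H" by (rule card_Un_le)
      finally have "card X \<le> card (X - H) + card H" .
      thus ?thesis using that(2) cH n unfolding m_def by linarith
    qed
    obtain A' where A': "A' \<subseteq> A - H" "card A' = m"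
      using big[OF h(1) h(4)] obtain_subset_with_card_n by metis
    obtain B' where B': "B' \<subseteq> B - H" "card B' = m"
      using big[OF h(2) h(5)] obtain_subset_with_card_n by metis
    obtain k a where ka: "k < d" "a \<in> A'" "g (k,a) \<in> B'"
      using gE[of A' B'] A' B' h(1,2) by blast
    have "a \<notin> H" "g (k,a) \<notin> H" "a \<in> A" "g (k,a) \<in> B" using ka A' B' by auto
    hence "N a k \<in> B" using ka by (simp add: N_def)
    thus "\<exists>a\<in>A. \<exists>k<DD. N a k \<in> B" using ka \<open>a \<in> A\<close> DDd by (intro bexI[of _ a] exI[of _ k]) auto
  qed
  thus ?thesis by blast
qed

lemma graph_exists: "\<exists>N. graph_ok n DD N"
proof (cases "n \<ge> 2048")
  case True thus ?thesis by (rule graph_large)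
next
  case False
  hence "n \<le> DD" by (simp add: DD_def dd_def)
  thus ?thesis using graph_small by blast
qed


context
  fixes N :: "nat \<Rightarrow> nat \<Rightarrow> nat" and D :: nat
begin

definition hasB :: "(nat \<Rightarrow> label) \<Rightarrow> nat \<Rightarrow> bool" where
  "hasB lab x \<longleftrightarrow> (\<exists>k<D. lab (N x k) = Blue)"
definition pk :: "(nat \<Rightarrow> label) \<Rightarrow> nat \<Rightarrow> nat" where
  "pk lab x = (LEAST k. k < D \<and> lab (N x k) = Blue)"
definition prp :: "(nat \<Rightarrow> label) \<Rightarrow> nat \<Rightarrow> nat \<Rightarrow> bool" where
  "prp lab x j \<longleftrightarrow> lab x = Red \<and> hasB lab x \<and> N x (pk lab x) = j"
definition hasP :: "(nat \<Rightarrow> label) \<Rightarrow> nat \<Rightarrow> bool" where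
  "hasP lab j \<longleftrightarrow> (\<exists>k<D. prp lab (N j k) j)"
definition ak :: "(nat \<Rightarrow> label) \<Rightarrow> nat \<Rightarrow> nat" where
  "ak lab j = (LEAST k. k < D \<and> prp lab (N j k) j)"
definition bluem :: "(nat \<Rightarrow> label) \<Rightarrow> nat \<Rightarrow> bool" where
  "bluem lab j \<longleftrightarrow> lab j = Blue \<and> hasP lab j"
definition redm :: "(nat \<Rightarrow> label) \<Rightarrow> nat \<Rightarrow> bool" where
  "redm lab x \<longleftrightarrow> lab x = Red \<and> hasB lab x \<and> bluem lab (N x (pk lab x)) \<and>
      N (N x (pk lab x)) (ak lab (N x (pk lab x))) = x"
definition swp :: "(nat \<Rightarrow> label) \<Rightarrow> nat \<Rightarrow> bool" where
  "swp lab i \<longleftrightarrow> redm lab i \<or> bluem lab i"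
definition slot :: "(nat \<Rightarrow> label) \<Rightarrow> nat \<Rightarrow> nat" where
  "slot lab i = (if redm lab i then pk lab i else ak lab i)"
definition partner :: "(nat \<Rightarrow> label) \<Rightarrow> nat \<Rightarrow> nat" where
  "partner lab i = N i (slot lab i)"
definition stepL :: "(nat \<Rightarrow> label) \<Rightarrow> nat \<Rightarrow> label" where
  "stepL lab i = (if swp lab i then Bot else lab i)"
definition stepP :: "(nat \<Rightarrow> label) \<Rightarrow> (nat \<Rightarrow> bool list) \<Rightarrow> nat \<Rightarrow> bool list" where
  "stepP lab pay i = (if swp lab i then pay (partner lab i) else pay i)"

fun iterL :: "nat \<Rightarrow> (nat \<Rightarrow> label) \<Rightarrow> nat \<Rightarrow> label" where
  "iterL 0 lab = lab"
| "iterL (Suc t) lab = stepL (iterL t lab)"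

fun iterP :: "nat \<Rightarrow> (nat \<Rightarrow> label) \<Rightarrow> (nat \<Rightarrow> bool list) \<Rightarrow> nat \<Rightarrow> bool list" where
  "iterP 0 lab pay = pay"
| "iterP (Suc t) lab pay = stepP (iterL t lab) (iterP t lab pay)"

lemma hasB_pk: "hasB lab x \<Longrightarrow> pk lab x < D \<and> lab (N x (pk lab x)) = Blue"
  unfolding hasB_def pk_def by (metis (mono_tags, lifting) LeastI)

lemma hasP_ak: "hasP lab j \<Longrightarrow> ak lab j < D \<and> prp lab (N j (ak lab j)) j"
  unfolding hasP_def ak_def by (metis (mono_tags, lifting) LeastI)

lemma redm_red: "redm lab x \<Longrightarrow> lab x = Red" by (simp add: redm_def)
lemma bluem_blue: "bluem lab x \<Longrightarrow> lab x = Blue" by (simp add: bluem_def)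
lemma not_redm_bluem: "\<not> (redm lab x \<and> bluem lab x)" by (auto simp: redm_def bluem_def)

lemma bluem_partner: "bluem lab j \<Longrightarrow> redm lab (partner lab j) \<and> partner lab (partner lab j) = j"
proof -
  assume b: "bluem lab j"
  hence nr: "\<not> redm lab j" using not_redm_bluem by blast
  have hp: "hasP lab j" using b by (simp add: bluem_def)
  define x where "x = N j (ak lab j)"
  have px: "partner lab j = x" using nr by (simp add: partner_def slot_def x_def)
  have pr: "prp lab x j" using hasP_ak[OF hp] by (simp add: x_def)
  hence xr: "lab x = Red" "hasB lab x" "N x (pk lab x) = j" by (auto simp: prp_def)
  have rx: "redm lab x" using xr b by (simp add: redm_def x_def)
  thus ?thesis using px xr by (simp add: partner_def slot_def)
qed

lemma redm_partner: "redm lab x \<Longrightarrow> bluem lab (partner lab x) \<and> partner lab (partner lab x) = x"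
proof -
  assume r: "redm lab x"
  hence px: "partner lab x = N x (pk lab x)" by (simp add: partner_def slot_def)
  have b: "bluem lab (partner lab x)" using r px by (simp add: redm_def)
  hence "\<not> redm lab (partner lab x)" using not_redm_bluem by blast
  hence "partner lab (partner lab x) = N (partner lab x) (ak lab (partner lab x))"
    by (simp add: partner_def slot_def)
  also have "\<dots> = x" using r px by (simp add: redm_def)
  finally show ?thesis using b by simp
qed

lemma swp_partner: "swp lab i \<Longrightarrow> swp lab (partner lab i) \<and> partner lab (partner lab i) = i"
  using bluem_partner redm_partner unfolding swp_def by blast

lemma swp_slot: "swp lab i \<Longrightarrow> slot lab i < D"
  unfolding swp_def slot_def redm_def bluem_def using hasB_pk hasP_ak by auto

lemma stepL_cases: "stepL lab i = Bot \<or> stepL lab i = lab i" by (simp add: stepL_def)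

lemma iterL_cases: "iterL t lab i = Bot \<or> iterL t lab i = lab i"
  by (induction t) (auto simp: stepL_def)

end


definition st :: "(nat \<Rightarrow> label) \<Rightarrow> (nat \<Rightarrow> bool list) \<Rightarrow> nat \<Rightarrow> elem list" where
  "st lab pay n = map (\<lambda>i. (lab i, pay i)) [0..<n]"

lemma set_concat_pairs: "set (concat (map (\<lambda>(i,j). [i,j]) P)) = fst ` set P \<union> snd ` set P"
  by (induction P) auto

lemma legal_swap_trans:
  assumes "legal_swap X Y" "legal_swap Y Z" shows "legal_swap X Z"
proof -
  obtain P1 where P1: "distinct (concat (map (\<lambda>(i,j). [i,j]) P1))"
    "\<forall>(i,j)\<in>set P1. i < length X \<and> j < length X \<and> opposite (fst (X!i)) (fst (X!j)) \<and>
             Y!i = (Bot, snd (X!j)) \<and> Y!j = (Bot, snd (X!i))"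
    "\<forall>k<length X. k \<notin> fst ` set P1 \<and> k \<notin> snd ` set P1 \<longrightarrow> Y!k = X!k" and lY: "length Y = length X"
    using assms(1) unfolding legal_swap_def by blast
  obtain P2 where P2: "distinct (concat (map (\<lambda>(i,j). [i,j]) P2))"
    "\<forall>(i,j)\<in>set P2. i < length Y \<and> j < length Y \<and> opposite (fst (Y!i)) (fst (Y!j)) \<and>
             Z!i = (Bot, snd (Y!j)) \<and> Z!j = (Bot, snd (Y!i))"
    "\<forall>k<length Y. k \<notin> fst ` set P2 \<and> k \<notin> snd ` set P2 \<longrightarrow> Z!k = Y!k" and lZ: "length Z = length Y"
    using assms(2) unfolding legal_swap_def by blast
  have bot1: "fst (Y!k) = Bot" if "k \<in> fst ` set P1 \<union> snd ` set P1" for k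
    using that P1(2) by auto
  have col2: "fst (Y!k) \<noteq> Bot" if "k \<in> fst ` set P2 \<union> snd ` set P2" for k
    using that P2(2) by (auto simp: opposite_def)
  have disj: "(fst ` set P1 \<union> snd ` set P1) \<inter> (fst ` set P2 \<union> snd ` set P2) = {}"
    using bot1 col2 by blast
  have same: "X!k = Y!k" if "k < length X" "k \<notin> fst ` set P1 \<union> snd ` set P1" for k
    using P1(3) that by auto
  show ?thesis unfolding legal_swap_def
  proof (intro conjI exI[of _ "P1 @ P2"])
    show "length Z = length X" using lY lZ by simp
    show "distinct (concat (map (\<lambda>(i,j). [i,j]) (P1 @ P2)))"
      using P1(1) P2(1) disj by (simp only: map_append concat_append distinct_append set_concat_pairs)
    show "\<forall>(i,j)\<in>set (P1@P2). i < length X \<and> j < length X \<and> opposite (fst (X!i)) (fst (X!j)) \<and>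
             Z!i = (Bot, snd (X!j)) \<and> Z!j = (Bot, snd (X!i))"
    proof (intro ballI, clarify)
      fix i j assume "(i,j) \<in> set (P1 @ P2)"
      then consider "(i,j) \<in> set P1" | "(i,j) \<in> set P2" by auto
      thus "i < length X \<and> j < length X \<and> opposite (fst (X!i)) (fst (X!j)) \<and>
             Z!i = (Bot, snd (X!j)) \<and> Z!j = (Bot, snd (X!i))"
      proof cases
        case 1
        hence ij: "i \<in> fst ` set P1 \<union> snd ` set P1" "j \<in> fst ` set P1 \<union> snd ` set P1" by force+
        hence "i \<notin> fst ` set P2 \<union> snd ` set P2" "j \<notin> fst ` set P2 \<union> snd ` set P2" using disj by blast+
        hence "Z!i = Y!i" "Z!j = Y!j" using P2(3) 1 P1(2) lY by auto
        thus ?thesis using 1 P1(2) by auto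
      next
        case 2
        hence ij: "i \<in> fst ` set P2 \<union> snd ` set P2" "j \<in> fst ` set P2 \<union> snd ` set P2" by force+
        hence "i \<notin> fst ` set P1 \<union> snd ` set P1" "j \<notin> fst ` set P1 \<union> snd ` set P1" using disj by blast+
        hence "X!i = Y!i" "X!j = Y!j" using same 2 P2(2) lY by auto
        thus ?thesis using 2 P2(2) lY by auto
      qed
    qed
    show "\<forall>k<length X. k \<notin> fst ` set (P1@P2) \<and> k \<notin> snd ` set (P1@P2) \<longrightarrow> Z!k = X!k"
    proof (intro allI impI)
      fix k assume k: "k < length X" "k \<notin> fst ` set (P1@P2) \<and> k \<notin> snd ` set (P1@P2)"
      hence "Y!k = X!k" using P1(3) by auto
      moreover have "Z!k = Y!k" using P2(3) k lY by auto
      ultimately show "Z!k = X!k" by simp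
    qed
  qed
qed

lemma distinct_concat_pairs:
  assumes "distinct xs" "inj_on f (set xs)" "f ` set xs \<inter> set xs = {}"
  shows "distinct (concat (map (\<lambda>x. [x, f x]) xs))"
  using assms
proof (induction xs)
  case Nil thus ?case by simp
next
  case (Cons a xs)
  have "set (concat (map (\<lambda>x. [x, f x]) xs)) = set xs \<union> f ` set xs" by auto
  thus ?case using Cons by (auto simp: inj_on_def)
qed

lemma step_legal:
  assumes rng: "\<forall>i<n. \<forall>k<D. N i k < n"
  shows "legal_swap (st lab pay n) (st (stepL N D lab) (stepP N D lab pay) n)"
  unfolding legal_swap_def
proof (intro conjI exI[of _ "map (\<lambda>x. (x, partner N D lab x)) (filter (redm N D lab) [0..<n])"])
  let ?p = "partner N D lab"
  let ?xs = "filter (redm N D lab) [0..<n]"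
  show "length (st (stepL N D lab) (stepP N D lab pay) n) = length (st lab pay n)" by (simp add: st_def)
  have "map (\<lambda>(i,j). [i,j]) (map (\<lambda>x. (x, ?p x)) ?xs) = map (\<lambda>x. [x, ?p x]) ?xs" by simp
  moreover have "distinct (concat (map (\<lambda>x. [x, ?p x]) ?xs))"
  proof (rule distinct_concat_pairs)
    show "distinct ?xs" by simp
    show "inj_on ?p (set ?xs)" by (rule inj_on_inverseI[of _ ?p]) (auto dest: redm_partner)
    show "?p ` set ?xs \<inter> set ?xs = {}"
    proof (rule ccontr)
      assume "?p ` set ?xs \<inter> set ?xs \<noteq> {}"
      then obtain x where "x \<in> set ?xs" "?p x \<in> set ?xs" by blast
      hence "redm N D lab x" "redm N D lab (?p x)" by auto
      thus False using redm_partner not_redm_bluem by metis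
    qed
  qed
  ultimately show "distinct (concat (map (\<lambda>(i,j). [i,j]) (map (\<lambda>x. (x, ?p x)) ?xs)))" by (simp only:)
  have pn: "?p i < n" if "swp N D lab i" "i < n" for i
    using rng swp_slot[OF that(1)] that(2) by (simp add: partner_def)
  show "\<forall>(i,j)\<in>set (map (\<lambda>x. (x, ?p x)) ?xs). i < length (st lab pay n) \<and> j < length (st lab pay n) \<and>
      opposite (fst (st lab pay n ! i)) (fst (st lab pay n ! j)) \<and>
      st (stepL N D lab) (stepP N D lab pay) n ! i = (Bot, snd (st lab pay n ! j)) \<and>
      st (stepL N D lab) (stepP N D lab pay) n ! j = (Bot, snd (st lab pay n ! i))"
  proof (intro ballI)
    fix p assume "p \<in> set (map (\<lambda>x. (x, ?p x)) ?xs)"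
    then obtain i where pi: "p = (i, ?p i)" and i: "i < n" "redm N D lab i" by auto
    have s: "swp N D lab i" using i by (simp add: swp_def)
    have r: "bluem N D lab (?p i)" "?p (?p i) = i" using redm_partner[OF i(2)] by auto
    have s2: "swp N D lab (?p i)" using r by (simp add: swp_def)
    have pin: "?p i < n" using pn[OF s i(1)] .
    have "?p i < n \<and> opposite (fst (st lab pay n ! i)) (fst (st lab pay n ! ?p i)) \<and>
      st (stepL N D lab) (stepP N D lab pay) n ! i = (Bot, snd (st lab pay n ! ?p i)) \<and>
      st (stepL N D lab) (stepP N D lab pay) n ! ?p i = (Bot, snd (st lab pay n ! i))"
      using pn[OF s i(1)] i s s2 r redm_red[OF i(2)] bluem_blue[OF r(1)]
      by (simp add: st_def opposite_def stepL_def stepP_def)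
    thus "case p of (i,j) \<Rightarrow> i < length (st lab pay n) \<and> j < length (st lab pay n) \<and>
      opposite (fst (st lab pay n ! i)) (fst (st lab pay n ! j)) \<and>
      st (stepL N D lab) (stepP N D lab pay) n ! i = (Bot, snd (st lab pay n ! j)) \<and>
      st (stepL N D lab) (stepP N D lab pay) n ! j = (Bot, snd (st lab pay n ! i))"
      using pi i pin by (simp add: st_def)
  qed
  show "\<forall>k<length (st lab pay n). k \<notin> fst ` set (map (\<lambda>x. (x, ?p x)) ?xs) \<and> k \<notin> snd ` set (map (\<lambda>x. (x, ?p x)) ?xs) \<longrightarrow>
      st (stepL N D lab) (stepP N D lab pay) n ! k = st lab pay n ! k"
  proof (intro allI impI)
    fix k assume k0: "k < length (st lab pay n)" and hh: "k \<notin> fst ` set (map (\<lambda>x. (x, ?p x)) ?xs) \<and> k \<notin> snd ` set (map (\<lambda>x. (x, ?p x)) ?xs)"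
    have k: "k < n" using k0 by (simp add: st_def)
    have h1: "k \<notin> fst ` (\<lambda>x. (x, ?p x)) ` {x \<in> set [0..<n]. redm N D lab x}"
      and h2: "k \<notin> snd ` (\<lambda>x. (x, ?p x)) ` {x \<in> set [0..<n]. redm N D lab x}" using hh by auto
    have "\<not> redm N D lab k" using h1 k by force
    moreover have "\<not> bluem N D lab k"
    proof
      assume b: "bluem N D lab k"
      have "?p k < n" using pn[of k] b k by (simp add: swp_def)
      hence "(?p k, ?p (?p k)) \<in> (\<lambda>x. (x, ?p x)) ` {x \<in> set [0..<n]. redm N D lab x}"
        using bluem_partner[OF b] by auto
      thus False using h2 bluem_partner[OF b] by force
    qed
    ultimately show "st (stepL N D lab) (stepP N D lab pay) n ! k = st lab pay n ! k"
      using k by (simp add: stepL_def stepP_def swp_def st_def)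
  qed
qed


definition Rs :: "nat \<Rightarrow> (nat \<Rightarrow> label) \<Rightarrow> nat set" where "Rs n lab = {i. i < n \<and> lab i = Red}"
definition Bs :: "nat \<Rightarrow> (nat \<Rightarrow> label) \<Rightarrow> nat set" where "Bs n lab = {i. i < n \<and> lab i = Blue}"

lemma card_redm_bluem:
  assumes rng: "\<forall>i<n. \<forall>k<D. N i k < n"
  shows "card {i. i < n \<and> redm N D lab i} = card {i. i < n \<and> bluem N D lab i}"
proof -
  have pn: "partner N D lab i < n" if "swp N D lab i" "i < n" for i
    using rng swp_slot[OF that(1)] that(2) by (simp add: partner_def)
  have "bij_betw (partner N D lab) {i. i < n \<and> redm N D lab i} {i. i < n \<and> bluem N D lab i}"
  proof (rule bij_betw_byWitness[where f' = "partner N D lab"])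
    show "\<forall>a\<in>{i. i < n \<and> redm N D lab i}. partner N D lab (partner N D lab a) = a"
      using redm_partner by blast
    show "\<forall>a\<in>{i. i < n \<and> bluem N D lab i}. partner N D lab (partner N D lab a) = a"
      using bluem_partner by blast
    show "partner N D lab ` {i. i < n \<and> redm N D lab i} \<subseteq> {i. i < n \<and> bluem N D lab i}"
      using redm_partner pn unfolding swp_def by blast
    show "partner N D lab ` {i. i < n \<and> bluem N D lab i} \<subseteq> {i. i < n \<and> redm N D lab i}"
      using bluem_partner pn unfolding swp_def by blast
  qed
  thus ?thesis by (rule bij_betw_same_card)
qed

lemma Rs_step: "card (Rs n (stepL N D lab)) = card (Rs n lab) - card {i. i < n \<and> redm N D lab i}"
proof -
  have "Rs n (stepL N D lab) = Rs n lab - {i. i < n \<and> redm N D lab i}"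
    by (auto simp: Rs_def stepL_def swp_def dest: bluem_blue)
  moreover have "{i. i < n \<and> redm N D lab i} \<subseteq> Rs n lab" by (auto simp: Rs_def dest: redm_red)
  ultimately show ?thesis by (simp add: card_Diff_subset finite_subset[of _ "{..<n}"])
qed

lemma Bs_step: "card (Bs n (stepL N D lab)) = card (Bs n lab) - card {i. i < n \<and> bluem N D lab i}"
proof -
  have "Bs n (stepL N D lab) = Bs n lab - {i. i < n \<and> bluem N D lab i}"
    by (auto simp: Bs_def stepL_def swp_def dest: redm_red)
  moreover have "{i. i < n \<and> bluem N D lab i} \<subseteq> Bs n lab" by (auto simp: Bs_def dest: bluem_blue)
  ultimately show ?thesis by (simp add: card_Diff_subset finite_subset[of _ "{..<n}"])
qed

lemma progress:
  assumes g: "graph_ok n D N" and r: "n < 512 * card (Rs n lab)" and b: "n < 512 * card (Bs n lab)"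
  shows "512 * card (Rs n lab) \<le> 512 * D * card {i. i < n \<and> bluem N D lab i} + n"
proof -
  have rng: "\<forall>i<n. \<forall>k<D. N i k < n" and sym: "\<forall>i<n. \<forall>k<D. \<exists>k'<D. N (N i k) k' = i"
    and exp: "\<And>A B. A \<subseteq> {..<n} \<Longrightarrow> B \<subseteq> {..<n} \<Longrightarrow> A \<inter> B = {} \<Longrightarrow> n < 512 * card A \<Longrightarrow> n < 512 * card B
        \<Longrightarrow> (\<exists>a\<in>A. \<exists>k<D. N a k \<in> B)"
    using g unfolding graph_ok_def by blast+
  define P where "P = {x \<in> Rs n lab. hasB N D lab x}"
  define M where "M = {i. i < n \<and> bluem N D lab i}"
  have A: "512 * card (Rs n lab - P) \<le> n"
  proof (rule ccontr)
    assume "\<not> ?thesis"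
    hence "n < 512 * card (Rs n lab - P)" by simp
    moreover have "Rs n lab - P \<subseteq> {..<n}" "Bs n lab \<subseteq> {..<n}" "(Rs n lab - P) \<inter> Bs n lab = {}"
      by (auto simp: Rs_def Bs_def)
    ultimately obtain a k where "a \<in> Rs n lab - P" "k < D" "N a k \<in> Bs n lab"
      using exp[of "Rs n lab - P" "Bs n lab"] b by blast
    thus False by (auto simp: P_def hasB_def Bs_def)
  qed
  have "P \<subseteq> (\<Union>j\<in>M. (\<lambda>k. N j k) ` {..<D})"
  proof
    fix x assume x: "x \<in> P"
    hence xr: "x < n" "lab x = Red" "hasB N D lab x" by (auto simp: P_def Rs_def)
    define j where "j = N x (pk N D lab x)"
    have pk: "pk N D lab x < D" "lab j = Blue" using hasB_pk[OF xr(3)] by (auto simp: j_def)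
    have jn: "j < n" using rng xr(1) pk(1) by (simp add: j_def)
    obtain k' where k': "k' < D" "N j k' = x" using sym xr(1) pk(1) by (auto simp: j_def)
    have "prp N D lab (N j k') j" using k' xr by (simp add: prp_def j_def)
    hence "bluem N D lab j" using k' pk(2) by (auto simp: bluem_def hasP_def)
    hence "j \<in> M" using jn by (simp add: M_def)
    thus "x \<in> (\<Union>j\<in>M. (\<lambda>k. N j k) ` {..<D})" using k' by force
  qed
  hence "card P \<le> card (\<Union>j\<in>M. (\<lambda>k. N j k) ` {..<D})" by (intro card_mono) (auto simp: M_def)
  also have "\<dots> \<le> (\<Sum>j\<in>M. card ((\<lambda>k. N j k) ` {..<D}))" by (rule card_UN_le) (simp add: M_def)
  also have "\<dots> \<le> (\<Sum>j\<in>M. D)" by (intro sum_mono) (metis card_image_le card_lessThan finite_lessThan)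
  also have "\<dots> = D * card M" by simp
  finally have cP: "card P \<le> D * card M" .
  have "card (Rs n lab) \<le> card P + card (Rs n lab - P)"
  proof -
    have "card (Rs n lab) = card (P \<union> (Rs n lab - P))" by (metis P_def Un_Diff_cancel mem_Collect_eq subsetI sup.absorb2 Collect_conj_eq Int_lower1 Un_Diff_cancel2)
    also have "\<dots> \<le> card P + card (Rs n lab - P)" by (rule card_Un_le)
    finally show ?thesis .
  qed
  thus ?thesis using A cP unfolding M_def by linarith
qed


lemma legal_swap_refl: "legal_swap X X"
  unfolding legal_swap_def by (intro conjI exI[of _ "[]"]) auto

lemma num_label_st: "num_label l (st lab pay n) = card {i. i < n \<and> lab i = l}"
  unfolding num_label_def st_def by (intro arg_cong[where f=card]) auto

lemma num_colored_st: "num_colored (st lab pay n) = card (Rs n lab) + card (Bs n lab)"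
proof -
  have "{i. i < length (st lab pay n) \<and> colored (st lab pay n ! i)} = Rs n lab \<union> Bs n lab"
    by (auto simp: st_def colored_def Rs_def Bs_def) (metis label.exhaust)
  moreover have "Rs n lab \<inter> Bs n lab = {}" by (auto simp: Rs_def Bs_def)
  ultimately show ?thesis unfolding num_colored_def
    by (simp add: card_Un_disjoint Rs_def Bs_def)
qed

lemma pow_bound:
  assumes "D \<ge> (1::nat)"
  shows "(1 - 1 / real D) ^ (9*D) \<le> 1/512"
proof -
  have D0: "real D > 0" using assms by simp
  have "(1 - 1 / real D) ^ D \<le> exp (- 1 / real D) ^ D"
    using assms exp_ge_add_one_self[of "- 1 / real D"] by (intro power_mono) (auto simp: field_simps)
  also have "exp (- 1 / real D) ^ D = exp (-1)" using D0 by (simp add: exp_of_nat_mult[symmetric])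
  also have "exp (-1::real) \<le> 1/2"
  proof -
    have "exp (1::real) \<ge> 2" using exp_ge_add_one_self[of "1::real"] by simp
    thus ?thesis by (simp add: exp_minus field_simps)
  qed
  finally have h: "(1 - 1 / real D) ^ D \<le> 1/2" .
  have "(1 - 1 / real D) ^ (9*D) = ((1 - 1 / real D) ^ D) ^ 9" by (simp add: power_mult mult.commute)
  also have "\<dots> \<le> (1/2)^9"
    using h assms by (intro power_mono) (auto simp: field_simps)
  also have "(1/2::real)^9 = 1/512" by (simp add: power_divide)
  finally show ?thesis .
qed

lemma algo_ok:
  assumes g: "graph_ok n D N" and D1: "D \<ge> 1" and lI: "length I = n"
  shows "approx_swap_ok I (st (iterL N D (9*D) (\<lambda>i. if i < n then fst (I!i) else Bot))
                               (iterP N D (9*D) (\<lambda>i. if i < n then fst (I!i) else Bot) (\<lambda>i. snd (I!i))) n)"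
proof -
  define lab0 where "lab0 = (\<lambda>i. if i < n then fst (I!i) else Bot)"
  define pay0 where "pay0 = (\<lambda>i. snd (I!i))"
  define T where "T = 9*D"
  have rng: "\<forall>i<n. \<forall>k<D. N i k < n" using g by (simp add: graph_ok_def)
  have st0: "st lab0 pay0 n = I" using lI by (intro nth_equalityI) (auto simp: st_def lab0_def pay0_def)
  have legal: "legal_swap I (st (iterL N D t lab0) (iterP N D t lab0 pay0) n)" for t
  proof (induction t)
    case 0 thus ?case using st0 legal_swap_refl by simp
  next
    case (Suc t) thus ?case using legal_swap_trans step_legal[OF rng] by simp
  qed
  define r where "r = (\<lambda>t. card (Rs n (iterL N D t lab0)))"
  define b where "b = (\<lambda>t. card (Bs n (iterL N D t lab0)))"
  define M where "M = (\<lambda>t. card {i. i < n \<and> bluem N D (iterL N D t lab0) i})"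
  have rS: "r (Suc t) = r t - M t" for t
    using Rs_step[of n N D "iterL N D t lab0"] card_redm_bluem[OF rng] by (simp add: r_def M_def)
  have bS: "b (Suc t) = b t - M t" for t
    using Bs_step[of n N D "iterL N D t lab0"] by (simp add: b_def M_def)
  have Mb: "M t \<le> b t" for t
    unfolding M_def b_def Bs_def by (intro card_mono) (auto dest: bluem_blue)
  have Mr: "M t \<le> r t" for t
  proof -
    have "M t = card {i. i < n \<and> redm N D (iterL N D t lab0) i}"
      unfolding M_def using card_redm_bluem[OF rng] by simp
    also have "\<dots> \<le> r t" unfolding r_def Rs_def by (intro card_mono) (auto dest: redm_red)
    finally show ?thesis .
  qed
  have diff: "int (r t) - int (b t) = int (r 0) - int (b 0)" for t
    by (induction t) (use rS bS Mb Mr in auto)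
  define mu where "mu = (\<lambda>t. min (r t) (b t))"
  have muS: "mu (Suc t) = mu t - M t" for t using rS bS Mb Mr by (auto simp: mu_def)
  have mu0: "mu 0 \<le> n"
  proof -
    have "r 0 \<le> n" unfolding r_def Rs_def by (rule order.trans[OF card_mono[of "{..<n}"]]) auto
    thus ?thesis by (simp add: mu_def)
  qed
  have inv: "real (mu t) \<le> real n / 512 + (1 - 1/real D)^t * real n" for t
  proof (induction t)
    case 0 thus ?case using mu0 by simp
  next
    case (Suc t)
    have q0: "0 \<le> 1 - 1/real D" using D1 by simp
    show ?case
    proof (cases "512 * mu t \<le> n")
      case True
      have "real (mu (Suc t)) \<le> real (mu t)" using muS by simp
      also have "\<dots> \<le> real n / 512" using True by simp
      finally show ?thesis using q0 by (simp add: add_increasing2)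
    next
      case False
      hence "n < 512 * r t" "n < 512 * b t" by (auto simp: mu_def)
      hence "512 * r t \<le> 512 * D * M t + n"
        using progress[OF g] unfolding r_def b_def M_def by blast
      hence "real (512 * r t) \<le> real (512 * D * M t + n)" by (simp only: of_nat_le_iff)
      hence "real (r t) \<le> real D * real (M t) + real n / 512" by simp
      moreover have "mu t \<le> r t" by (simp add: mu_def)
      ultimately have P: "real (mu t) \<le> real D * real (M t) + real n / 512" by linarith
      have "real (mu (Suc t)) = real (mu t) - real (M t)" using muS Mb Mr by (simp add: mu_def of_nat_diff)
      also have "\<dots> \<le> real n / 512 + (1 - 1/real D) * (real (mu t) - real n / 512)"
        using P D1 by (simp add: field_simps)
      also have "\<dots> \<le> real n / 512 + (1 - 1/real D) * ((1 - 1/real D)^t * real n)"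
        using Suc.IH q0 by (intro add_left_mono mult_left_mono) auto
      finally show ?thesis by simp
    qed
  qed
  have "real (mu T) \<le> real n / 512 + real n / 512"
  proof -
    have "(1 - 1/real D)^T * real n \<le> 1/512 * real n"
      using pow_bound[OF D1] by (intro mult_right_mono) (auto simp: T_def)
    thus ?thesis using inv[of T] by simp
  qed
  hence muT: "real (mu T) \<le> real n / 256" by simp
  let ?Out = "st (iterL N D T lab0) (iterP N D T lab0 pay0) n"
  have "real (num_colored ?Out) = real (r T) + real (b T)"
    by (simp add: num_colored_st r_def b_def)
  also have "\<dots> = 2 * real (mu T) + \<bar>real (r T) - real (b T)\<bar>" by (simp add: mu_def min_def)
  also have "\<bar>real (r T) - real (b T)\<bar> = \<bar>real (num_label Red I) - real (num_label Blue I)\<bar>"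
  proof -
    have "num_label Red I = r 0" "num_label Blue I = b 0"
      using st0[symmetric] by (simp_all add: num_label_st r_def b_def Rs_def Bs_def)
    moreover have "real (r T) - real (b T) = real (r 0) - real (b 0)" using diff[of T] by linarith
    ultimately show ?thesis by simp
  qed
  finally have "real (num_colored ?Out) \<le> real (length I) / 128 + \<bar>real (num_label Red I) - real (num_label Blue I)\<bar>"
    using muT lI by simp
  thus ?thesis using legal[of T] unfolding approx_swap_ok_def lab0_def pay0_def T_def by simp
qed


fun ball :: "(nat \<Rightarrow> nat \<Rightarrow> nat) \<Rightarrow> nat \<Rightarrow> nat \<Rightarrow> nat \<Rightarrow> nat list" where
  "ball N D 0 i = [i]"
| "ball N D (Suc r) i = i # concat (map (\<lambda>k. ball N D r (N i k)) [0..<D])"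

fun bl :: "nat \<Rightarrow> nat \<Rightarrow> nat" where
  "bl D 0 = 1"
| "bl D (Suc r) = 1 + D * bl D r"

lemma length_ball: "length (ball N D r i) = bl D r"
proof (induction r arbitrary: i)
  case 0 thus ?case by simp
next
  case (Suc r)
  have "length (concat (map (\<lambda>k. ball N D r (N i k)) [0..<D])) = (\<Sum>k\<leftarrow>[0..<D]. bl D r)"
    by (simp add: length_concat comp_def Suc.IH)
  also have "\<dots> = D * bl D r" by (simp add: sum_list_triv)
  finally show ?case by simp
qed

lemma set_ball_Suc: "set (ball N D (Suc r) i) = insert i (\<Union>k<D. set (ball N D r (N i k)))"
  by auto

lemma ball_self: "i \<in> set (ball N D r i)" by (cases r) auto

lemma ball_mono: "set (ball N D r i) \<subseteq> set (ball N D (Suc r) i)"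
proof (induction r arbitrary: i)
  case 0 thus ?case by simp
next
  case (Suc r)
  have "set (ball N D (Suc r) i) = insert i (\<Union>k<D. set (ball N D r (N i k)))" by (rule set_ball_Suc)
  moreover have "set (ball N D (Suc (Suc r)) i) = insert i (\<Union>k<D. set (ball N D (Suc r) (N i k)))" by (rule set_ball_Suc)
  ultimately show ?case using Suc.IH by (simp only:) blast
qed

lemma ball_mono_le: "r \<le> s \<Longrightarrow> set (ball N D r i) \<subseteq> set (ball N D s i)"
proof (induction s rule: dec_induct)
  case base thus ?case by simp
next
  case (step s) thus ?case using ball_mono[of N D s i] by simp
qed

lemma ball_nb: "k < D \<Longrightarrow> set (ball N D r (N i k)) \<subseteq> set (ball N D (Suc r) i)"
  by auto

lemma ball_trans: "v \<in> set (ball N D a i) \<Longrightarrow> set (ball N D b v) \<subseteq> set (ball N D (a+b) i)"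
proof (induction a arbitrary: i)
  case 0 thus ?case by simp
next
  case (Suc a)
  from Suc.prems consider "v = i" | k where "k < D" "v \<in> set (ball N D a (N i k))" by auto
  thus ?case
  proof cases
    case 1 thus ?thesis using ball_mono_le[of b "Suc a + b" N D i] by simp
  next
    case 2
    hence "set (ball N D b v) \<subseteq> set (ball N D (a+b) (N i k))" using Suc.IH by blast
    also have "\<dots> \<subseteq> set (ball N D (Suc a + b) i)" using ball_nb[OF 2(1)] by simp
    finally show ?thesis .
  qed
qed

lemma ball_range: "(\<forall>i<n. \<forall>k<D. N i k < n) \<Longrightarrow> i < n \<Longrightarrow> v \<in> set (ball N D r i) \<Longrightarrow> v < n"
proof (induction r arbitrary: i)
  case 0 thus ?case by simp
next
  case (Suc r)
  from Suc.prems(3) consider "v = i" | k where "k < D" "v \<in> set (ball N D r (N i k))" by auto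
  thus ?case
  proof cases
    case 1 thus ?thesis using Suc.prems by simp
  next
    case 2 thus ?thesis using Suc.IH[of "N i k"] Suc.prems by blast
  qed
qed

definition agree :: "nat set \<Rightarrow> (nat \<Rightarrow> label) \<Rightarrow> (nat \<Rightarrow> label) \<Rightarrow> bool" where
  "agree S lab lab' \<longleftrightarrow> (\<forall>v\<in>S. lab v = lab' v)"

lemma agree_mono: "agree S lab lab' \<Longrightarrow> T \<subseteq> S \<Longrightarrow> agree T lab lab'"
  by (auto simp: agree_def)

lemma loc1:
  assumes "agree (set (ball N D 1 x)) lab lab'"
  shows "hasB N D lab x = hasB N D lab' x" "pk N D lab x = pk N D lab' x" "prp N D lab x j = prp N D lab' x j"
proof -
  have a: "lab x = lab' x" "\<And>k. k < D \<Longrightarrow> lab (N x k) = lab' (N x k)"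
    using assms by (auto simp: agree_def)
  show h: "hasB N D lab x = hasB N D lab' x" using a by (auto simp: hasB_def)
  have "\<And>k. (k < D \<and> lab (N x k) = Blue) = (k < D \<and> lab' (N x k) = Blue)" using a by auto
  thus p: "pk N D lab x = pk N D lab' x" unfolding pk_def by simp
  show "prp N D lab x j = prp N D lab' x j" using a h p by (simp add: prp_def)
qed

lemma loc2:
  assumes "agree (set (ball N D 2 j)) lab lab'"
  shows "hasP N D lab j = hasP N D lab' j" "ak N D lab j = ak N D lab' j" "bluem N D lab j = bluem N D lab' j"
proof -
  have a: "lab j = lab' j" using assms ball_self by (auto simp: agree_def)
  have b: "prp N D lab (N j k) j' = prp N D lab' (N j k) j'" if "k < D" for k j'
  proof (rule loc1)
    have "set (ball N D 1 (N j k)) \<subseteq> set (ball N D 2 j)" using ball_nb[OF that, of N 1 j] by (simp add: numeral_2_eq_2)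
    thus "agree (set (ball N D 1 (N j k))) lab lab'" using assms agree_mono by blast
  qed
  show h: "hasP N D lab j = hasP N D lab' j" using b by (auto simp: hasP_def)
  have "\<And>k. (k < D \<and> prp N D lab (N j k) j) = (k < D \<and> prp N D lab' (N j k) j)" using b by auto
  thus p: "ak N D lab j = ak N D lab' j" unfolding ak_def by simp
  show "bluem N D lab j = bluem N D lab' j" using a h by (simp add: bluem_def)
qed

lemma loc3:
  assumes "agree (set (ball N D 3 x)) lab lab'"
  shows "redm N D lab x = redm N D lab' x" "bluem N D lab x = bluem N D lab' x"
    "swp N D lab x = swp N D lab' x" "slot N D lab x = slot N D lab' x" "stepL N D lab x = stepL N D lab' x"
proof -
  have s1: "set (ball N D 1 x) \<subseteq> set (ball N D 3 x)" by (rule ball_mono_le) simp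
  have s2: "set (ball N D 2 x) \<subseteq> set (ball N D 3 x)" by (rule ball_mono_le) simp
  have a1: "agree (set (ball N D 1 x)) lab lab'" using assms s1 agree_mono by blast
  have a2: "agree (set (ball N D 2 x)) lab lab'" using assms s2 agree_mono by blast
  have ax: "lab x = lab' x" using assms ball_self by (auto simp: agree_def)
  note l1 = loc1[OF a1]
  show b: "bluem N D lab x = bluem N D lab' x" using loc2[OF a2] by simp
  show r: "redm N D lab x = redm N D lab' x"
  proof (cases "hasB N D lab x")
    case False thus ?thesis using l1 by (simp add: redm_def)
  next
    case True
    hence pk: "pk N D lab x < D" using hasB_pk by blast
    define j where "j = N x (pk N D lab x)"
    have "set (ball N D 2 j) \<subseteq> set (ball N D 3 x)" using ball_nb[OF pk, of N 2 x] by (simp add: j_def numeral_3_eq_3 numeral_2_eq_2)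
    hence "agree (set (ball N D 2 j)) lab lab'" using assms agree_mono by blast
    note l2 = loc2[OF this]
    show ?thesis using l1 l2 ax unfolding redm_def j_def by simp
  qed
  show sw: "swp N D lab x = swp N D lab' x" using b r by (simp add: swp_def)
  show "slot N D lab x = slot N D lab' x"
  proof -
    have "ak N D lab x = ak N D lab' x" using loc2[OF a2] by simp
    thus ?thesis using r l1 by (simp add: slot_def)
  qed
  show "stepL N D lab x = stepL N D lab' x" using sw ax by (simp add: stepL_def)
qed

lemma agree_step:
  assumes "agree (set (ball N D (r+3) i)) lab lab'"
  shows "agree (set (ball N D r i)) (stepL N D lab) (stepL N D lab')"
  unfolding agree_def
proof
  fix v assume v: "v \<in> set (ball N D r i)"
  have "set (ball N D 3 v) \<subseteq> set (ball N D (r+3) i)" by (rule ball_trans[OF v])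
  hence "agree (set (ball N D 3 v)) lab lab'" using assms by (rule agree_mono[rotated])
  thus "stepL N D lab v = stepL N D lab' v" by (rule loc3(5))
qed

lemma agree_iter:
  assumes "agree (set (ball N D (r + 3*t) i)) lab lab'"
  shows "agree (set (ball N D r i)) (iterL N D t lab) (iterL N D t lab')"
  using assms
proof (induction t arbitrary: r)
  case 0 thus ?case by simp
next
  case (Suc t)
  have "agree (set (ball N D ((r+3) + 3*t) i)) lab lab'" using Suc.prems by (simp add: algebra_simps)
  hence "agree (set (ball N D (r+3) i)) (iterL N D t lab) (iterL N D t lab')" by (rule Suc.IH)
  from agree_step[OF this] show ?case by simp
qed


lemma fold_app_len: "length (fold (\<lambda>g vs. vs @ [h vs g]) gs v0) = length v0 + length gs"
  by (induction gs rule: rev_induct) auto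

lemma fold_app_nth:
  "j < length gs \<Longrightarrow> fold (\<lambda>g vs. vs @ [h vs g]) gs v0 ! (length v0 + j)
     = h (take (length v0 + j) (fold (\<lambda>g vs. vs @ [h vs g]) gs v0)) (gs ! j)"
proof (induction gs rule: rev_induct)
  case Nil thus ?case by simp
next
  case (snoc g gs)
  let ?F = "fold (\<lambda>g vs. vs @ [h vs g]) gs v0"
  have lF: "length ?F = length v0 + length gs" by (rule fold_app_len)
  show ?case
  proof (cases "j < length gs")
    case True
    thus ?thesis using snoc.IH lF by (simp add: nth_append)
  next
    case False
    hence j: "j = length gs" using snoc.prems by simp
    thus ?thesis using lF by (simp add: nth_append)
  qed
qed

lemma fold_app_prefix:
  "n \<le> length v0 \<Longrightarrow> take n (fold (\<lambda>g vs. vs @ [h vs g]) gs v0) = take n v0"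
  by (induction gs rule: rev_induct) (auto simp: fold_app_len)

lemma eval_gate_take:
  assumes a: "\<forall>x\<in>set (gate_ins g). x < m" shows "eval_gate (take m vs) g = eval_gate vs g"
proof (cases g)
  case (BoolG ins f)
  have "map (\<lambda>i. getb (take m vs ! i)) ins = map (\<lambda>i. getb (vs ! i)) ins"
    using a BoolG by (intro map_cong) auto
  thus ?thesis using BoolG by (simp del: map_eq_conv)
next
  case (SelG b x y) thus ?thesis using a by auto
qed

lemma eval_wires_len: "length (eval_wires C I) = length (concat (map encode_elem I)) + length (gates C)"
  unfolding eval_wires_def by (rule fold_app_len)

lemma eval_wires_gate:
  assumes "j < length (gates C)" "\<forall>x\<in>set (gate_ins (gates C ! j)). x < length (concat (map encode_elem I)) + j"
  shows "eval_wires C I ! (length (concat (map encode_elem I)) + j) = eval_gate (eval_wires C I) (gates C ! j)"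
  using fold_app_nth[OF assms(1), of eval_gate "concat (map encode_elem I)"] eval_gate_take[OF assms(2)]
  unfolding eval_wires_def by simp

lemma eval_wires_input:
  "x < length (concat (map encode_elem I)) \<Longrightarrow> eval_wires C I ! x = concat (map encode_elem I) ! x"
proof -
  assume x: "x < length (concat (map encode_elem I))"
  have "take (length (concat (map encode_elem I))) (eval_wires C I) = concat (map encode_elem I)"
    unfolding eval_wires_def by (subst fold_app_prefix) auto
  thus ?thesis using x by (metis nth_take)
qed

lemma concat_const_len_nth:
  assumes "\<forall>x\<in>set ys. length (f x) = c" "v < length ys" "r < c"
  shows "concat (map f ys) ! (c * v + r) = f (ys ! v) ! r"
  using assms
proof (induction ys arbitrary: v)
  case Nil thus ?case by simp
next
  case (Cons y ys)
  show ?case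
  proof (cases v)
    case 0 thus ?thesis using Cons.prems by (simp add: nth_append)
  next
    case (Suc w)
    have "concat (map f (y # ys)) ! (c * v + r) = concat (map f ys) ! (c * w + r)"
      using Cons.prems Suc by (simp add: nth_append)
    also have "\<dots> = f (ys ! w) ! r" using Cons Suc by simp
    finally show ?thesis using Suc by simp
  qed
qed

lemma concat_const_len: "\<forall>x\<in>set ys. length (f x) = c \<Longrightarrow> length (concat (map f ys)) = c * length ys"
  by (induction ys) auto

lemma enc_len: "length (concat (map encode_elem I)) = 3 * length I"
  by (rule concat_const_len) (simp add: encode_elem_def)

lemma enc_nth:
  assumes "v < length I" "r < 3"
  shows "concat (map encode_elem I) ! (3 * v + r) = encode_elem (I ! v) ! r"
  using concat_const_len_nth[of I encode_elem 3 v r] assms by (simp add: encode_elem_def)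

lemma input_kinds_len: "length (input_kinds n) = 3 * n"
  unfolding input_kinds_def by (simp add: length_concat sum_list_replicate)

lemma input_kinds_nth:
  assumes "v < n" "r < 3"
  shows "input_kinds n ! (3 * v + r) = [KBit, KBit, KWord] ! r"
proof -
  have "input_kinds n = concat (map (\<lambda>_. [KBit, KBit, KWord]) [0..<n])"
    by (simp add: input_kinds_def map_replicate_trivial)
  thus ?thesis using concat_const_len_nth[of "[0..<n]" "\<lambda>_. [KBit, KBit, KWord]" 3 v r] assms by simp
qed


fun decl :: "bool list \<Rightarrow> label list" where
  "decl (c # r # rest) = decode_label c r # decl rest"
| "decl _ = []"

context
  fixes n D T :: nat and N :: "nat \<Rightarrow> nat \<Rightarrow> nat"
begin

definition "MM = T*n*D"
definition "S0 = 3*n + MM + n"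
definition "sw t i k = S0 + ((t*n+i)*D + k)"
definition "pw t v = (if t = 0 then 3*v+2 else sw (t-1) v (D-1))"
definition "qw t i k = (if k = 0 then pw t i else sw t i (k-1))"
definition "Lb i = ball N D (3*T) i"
definition "insB i = concat (map (\<lambda>v. [3*v, 3*v+1]) (Lb i))"
definition "labOf i bs = (\<lambda>v. case map_of (zip (Lb i) (decl bs)) v of Some l \<Rightarrow> l | None \<Rightarrow> Bot)"
definition "Ff t i k bs = (swp N D (iterL N D t (labOf i bs)) i \<and> slot N D (iterL N D t (labOf i bs)) i = k)"
definition "Fc i bs = (iterL N D T (labOf i bs) i \<noteq> Bot)"
definition "tI idx = idx div (n*D)"
definition "iI idx = idx div D mod n"
definition "kI idx = idx mod D"
definition "BG idx = BoolG (insB (iI idx)) (Ff (tI idx) (iI idx) (kI idx))"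
definition "CG i = BoolG (insB i) (Fc i)"
definition "SG idx = SelG (3*n + idx) (qw (tI idx) (iI idx) (kI idx)) (pw (tI idx) (N (iI idx) (kI idx)))"
definition "circ = \<lparr>gates = map BG [0..<MM] @ map CG [0..<n] @ map SG [0..<MM],
                   outs = map (\<lambda>i. (3*n+MM+i, 3*i+1, pw T i)) [0..<n]\<rparr>"

lemma idx_enc:
  assumes "t < T" "i < n" "k < D"
  shows "(t*n+i)*D+k < MM" "tI ((t*n+i)*D+k) = t" "iI ((t*n+i)*D+k) = i" "kI ((t*n+i)*D+k) = k"
proof -
  have "(t*n+i)*D+k < (t*n+i+1)*D" using assms by simp
  also have "\<dots> \<le> (t*n+n)*D" using assms by (intro mult_right_mono) auto
  also have "\<dots> = (t+1)*n*D" by (simp add: algebra_simps)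
  also have "\<dots> \<le> T*n*D" using assms by (intro mult_right_mono) auto
  finally show "(t*n+i)*D+k < MM" by (simp add: MM_def)
  have dD: "((t*n+i)*D+k) div D = t*n+i" using assms by simp
  show "kI ((t*n+i)*D+k) = k" using assms by (simp add: kI_def)
  show "iI ((t*n+i)*D+k) = i" using assms dD by (simp add: iI_def)
  have "((t*n+i)*D+k) div (n*D) = ((t*n+i)*D+k) div D div n" by (simp add: div_mult2_eq mult.commute)
  also have "\<dots> = t" using dD assms by simp
  finally show "tI ((t*n+i)*D+k) = t" by (simp add: tI_def)
qed

lemma idx_dec:
  assumes "idx < MM"
  shows "idx = (tI idx * n + iI idx) * D + kI idx" "tI idx < T" "iI idx < n" "kI idx < D"
proof -
  have D0: "D > 0" and n0: "n > 0" using assms by (auto simp: MM_def intro: gr0I)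
  have "idx div D = (idx div D div n) * n + idx div D mod n" by simp
  moreover have "idx div D div n = idx div (n*D)" by (simp add: div_mult2_eq mult.commute)
  ultimately have "idx div D = tI idx * n + iI idx" by (simp add: tI_def iI_def)
  thus "idx = (tI idx * n + iI idx) * D + kI idx" by (metis div_mult_mod_eq kI_def)
  show "tI idx < T" using assms by (simp add: tI_def MM_def less_mult_imp_div_less mult.assoc)
  show "iI idx < n" using n0 by (simp add: iI_def)
  show "kI idx < D" using D0 by (simp add: kI_def)
qed

lemma len_gates: "length (gates circ) = 2*MM + n" by (simp add: circ_def)

lemma gates_BG: "j < MM \<Longrightarrow> gates circ ! j = BG j"
  by (simp add: circ_def nth_append)
lemma gates_CG: "i < n \<Longrightarrow> gates circ ! (MM + i) = CG i"
  by (simp add: circ_def nth_append)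
lemma gates_SG: "idx < MM \<Longrightarrow> gates circ ! (MM + n + idx) = SG idx"
  by (simp add: circ_def nth_append)

lemma sw_SG: "t < T \<Longrightarrow> i < n \<Longrightarrow> k < D \<Longrightarrow> sw t i k = 3*n + (MM + n + ((t*n+i)*D+k))"
  by (simp add: sw_def S0_def)

end


context
  fixes n D T :: nat and N :: "nat \<Rightarrow> nat \<Rightarrow> nat"
  assumes D1: "D \<ge> 1" and T1: "T \<ge> 1" and rng: "\<forall>i<n. \<forall>k<D. N i k < n"
begin

abbreviation "K \<equiv> wire_kinds n (circ n D T N)"

lemma lenK: "length K = 3*n + 2 * MM n D T + n"
  by (simp add: wire_kinds_def input_kinds_len len_gates)

lemma K_in: assumes "v < n" shows "K ! (3*v) = KBit" "K ! (3*v+1) = KBit" "K ! (3*v+2) = KWord"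
proof -
  have "3*v+2 < length (input_kinds n)" using assms by (simp add: input_kinds_len)
  hence a: "K ! (3*v + r) = input_kinds n ! (3*v + r)" if "r < 3" for r
    using that by (simp add: wire_kinds_def nth_append)
  show "K ! (3*v) = KBit" using a[of 0] input_kinds_nth[OF assms, of 0] by simp
  show "K ! (3*v+1) = KBit" using a[of 1] input_kinds_nth[OF assms, of 1] by simp
  show "K ! (3*v+2) = KWord" using a[of 2] input_kinds_nth[OF assms, of 2] by simp
qed

lemma K_gate: "j < 2 * MM n D T + n \<Longrightarrow> K ! (3*n + j) = gate_kind (gates (circ n D T N) ! j)"
  by (simp add: wire_kinds_def nth_append input_kinds_len len_gates)

lemma K_flag: "idx < MM n D T \<Longrightarrow> K ! (3*n + idx) = KBit"
  using K_gate[of idx] gates_BG[of idx n D T N] by (simp add: BG_def)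

lemma K_col: "i < n \<Longrightarrow> K ! (3*n + MM n D T + i) = KBit"
  using K_gate[of "MM n D T + i"] gates_CG[of i n D T N] by (simp add: CG_def add.assoc)

lemma K_sel: "idx < MM n D T \<Longrightarrow> K ! (3*n + (MM n D T + n + idx)) = KWord"
  using K_gate[of "MM n D T + n + idx"] gates_SG[of idx n D T N] by (simp add: SG_def)

lemma sw_props:
  assumes "t < T" "i < n" "k < D"
  shows "sw n D T t i k < length K" "K ! (sw n D T t i k) = KWord" "sw n D T t i k = S0 n D T + ((t*n+i)*D+k)"
proof -
  have idx: "(t*n+i)*D+k < MM n D T" using idx_enc[OF assms] by simp
  show "sw n D T t i k < length K" using idx by (simp add: sw_def S0_def lenK)
  show "K ! (sw n D T t i k) = KWord" using K_sel[OF idx] by (simp add: sw_def S0_def add.assoc)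
  show "sw n D T t i k = S0 n D T + ((t*n+i)*D+k)" by (simp add: sw_def)
qed

lemma pw_props:
  assumes "t \<le> T" "v < n"
  shows "pw n D T t v < length K" "K ! (pw n D T t v) = KWord" "pw n D T t v < S0 n D T + t*n*D"
proof -
  have "pw n D T t v < length K \<and> K ! (pw n D T t v) = KWord \<and> pw n D T t v < S0 n D T + t*n*D"
  proof (cases t)
    case 0
    thus ?thesis using K_in[OF assms(2)] assms lenK by (simp add: pw_def S0_def)
  next
    case (Suc s)
    have s: "s < T" using assms Suc by simp
    have D0: "D - 1 < D" using D1 by simp
    have "(s*n+v)*D + (D-1) < (s*n+v+1)*D" using D1 by (simp add: algebra_simps)
    also have "\<dots> \<le> (s*n+n)*D" using assms by (intro mult_right_mono) auto
    also have "\<dots> = t*n*D" using Suc by (simp add: algebra_simps)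
    finally have "(s*n+v)*D + (D-1) < t*n*D" .
    thus ?thesis using sw_props[OF s assms(2) D0] Suc by (simp add: pw_def)
  qed
  thus "pw n D T t v < length K" "K ! (pw n D T t v) = KWord" "pw n D T t v < S0 n D T + t*n*D" by auto
qed

lemma insB_props:
  assumes "i < n" "x \<in> set (insB D T N i)"
  shows "x < 3*n" "x < length K" "K ! x = KBit"
proof -
  obtain v where v: "v \<in> set (Lb D T N i)" "x = 3*v \<or> x = 3*v+1" using assms(2) by (auto simp: insB_def)
  have vn: "v < n" using ball_range[OF rng assms(1)] v(1) by (simp add: Lb_def)
  show "x < 3*n" using v vn by auto
  thus "x < length K" using lenK by simp
  show "K ! x = KBit" using v K_in[OF vn] by auto
qed

lemma wf: "wf_circuit n (circ n D T N)"
  unfolding wf_circuit_def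
proof (intro conjI allI impI ballI)
  fix j assume j: "j < length (gates (circ n D T N))"
  let ?M = "MM n D T"
  have Kt: "take m K ! x = K ! x" "x < length (take m K) \<longleftrightarrow> x < m \<and> x < length K" if "x < m" for x m
    using that by auto
  consider (b) "j < ?M" | (c) "?M \<le> j" "j < ?M + n" | (s) "?M + n \<le> j" using j by linarith
  thus "gate_typed (take (3*n + j) K) (gates (circ n D T N) ! j)"
  proof cases
    case b
    have ii: "iI n D j < n" using idx_dec[OF b] by simp
    have "x < 3*n + j \<and> take (3*n+j) K ! x = KBit" if "x \<in> set (insB D T N (iI n D j))" for x
      using insB_props[OF ii that] by simp
    thus ?thesis using gates_BG[OF b] insB_props[OF ii] by (auto simp: BG_def)
  next
    case c
    then obtain i where i: "i < n" "j = ?M + i" by (metis add_less_cancel_left le_Suc_ex)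
    have "x < 3*n + j \<and> take (3*n+j) K ! x = KBit" if "x \<in> set (insB D T N i)" for x
      using insB_props[OF i(1) that] by simp
    thus ?thesis using gates_CG[OF i(1), of D T N] i(2) insB_props[OF i(1)] by (auto simp: CG_def)
  next
    case s
    then obtain idx where idx: "j = ?M + n + idx" by (metis le_Suc_ex)
    hence idxM: "idx < ?M" using j len_gates by simp
    note dec = idx_dec[OF idxM]
    define t where "t = tI n D idx"
    define i where "i = iI n D idx"
    define k where "k = kI D idx"
    have tik: "t < T" "i < n" "k < D" "idx = (t*n+i)*D+k" using dec by (auto simp: t_def i_def k_def)
    have m: "3*n + j = S0 n D T + idx" using idx by (simp add: S0_def)
    have a: "3*n + idx < 3*n + j" "K ! (3*n+idx) = KBit" "3*n + idx < length K"
      using idx idxM K_flag[OF idxM] tik(2) lenK by auto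
    have q: "qw n D T t i k < S0 n D T + idx \<and> K ! (qw n D T t i k) = KWord \<and> qw n D T t i k < length K"
    proof (cases "k = 0")
      case True
      have "t*n*D \<le> idx" using tik by (simp add: algebra_simps)
      hence "pw n D T t i < S0 n D T + idx" using pw_props(3)[of t i] tik by linarith
      thus ?thesis using pw_props(1,2)[of t i] tik True by (simp add: qw_def)
    next
      case False
      hence "k - 1 < D" using tik by simp
      thus ?thesis using sw_props[OF tik(1,2), of "k-1"] tik False by (simp add: qw_def)
    qed
    have nb: "N i k < n" using rng tik by simp
    have p: "pw n D T t (N i k) < S0 n D T + idx \<and> K ! (pw n D T t (N i k)) = KWord \<and> pw n D T t (N i k) < length K"
    proof -
      have "t*n*D \<le> idx" using tik by (simp add: algebra_simps)
      hence "pw n D T t (N i k) < S0 n D T + idx" using pw_props(3)[of t "N i k"] tik nb by linarith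
      thus ?thesis using pw_props(1,2)[of t "N i k"] tik nb by simp
    qed
    show ?thesis using gates_SG[OF idxM] a q p m idx
      by (simp add: SG_def t_def[symmetric] i_def[symmetric] k_def[symmetric])
  qed
next
  show "length (outs (circ n D T N)) = n" by (simp add: circ_def)
next
  fix x assume "x \<in> set (outs (circ n D T N))"
  then obtain i where i: "i < n" "x = (3*n + MM n D T + i, 3*i+1, pw n D T T i)" by (auto simp: circ_def)
  show "case x of (a, b, p) \<Rightarrow> a < length K \<and> b < length K \<and> p < length K \<and> K ! a = KBit \<and> K ! b = KBit \<and> K ! p = KWord"
    using i K_col[OF i(1)] K_in[OF i(1)] pw_props[of T i] lenK by simp
qed

end


lemma gate_typed_take: "gate_typed (take m ks) g \<Longrightarrow> \<forall>x\<in>set (gate_ins g). x < m"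
  by (cases g) auto

lemma decl_pairs: "decl (concat (map (\<lambda>v. [c v, r v]) L)) = map (\<lambda>v. decode_label (c v) (r v)) L"
  by (induction L) auto

lemma decode_fst: "decode_label (fst e \<noteq> Bot) (fst e = Red) = fst e"
  by (cases "fst e") (auto simp: decode_label_def)

context
  fixes n D T :: nat and N :: "nat \<Rightarrow> nat \<Rightarrow> nat" and I :: "elem list"
  assumes D1: "D \<ge> 1" and T1: "T \<ge> 1" and rng: "\<forall>i<n. \<forall>k<D. N i k < n" and lI: "length I = n"
begin

abbreviation "vs \<equiv> eval_wires (circ n D T N) I"
abbreviation "lab0 \<equiv> (\<lambda>i. if i < n then fst (I!i) else Bot)"
abbreviation "pay0 \<equiv> (\<lambda>i. snd (I!i))"

lemma vs_gate: "j < 2 * MM n D T + n \<Longrightarrow> vs ! (3*n + j) = eval_gate vs (gates (circ n D T N) ! j)"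
proof -
  assume j: "j < 2 * MM n D T + n"
  have "gate_typed (take (3*n + j) (wire_kinds n (circ n D T N))) (gates (circ n D T N) ! j)"
    using wf[OF D1 T1 rng] j len_gates unfolding wf_circuit_def by auto
  hence "\<forall>x\<in>set (gate_ins (gates (circ n D T N) ! j)). x < 3*n + j" by (rule gate_typed_take)
  thus ?thesis using eval_wires_gate[of j "circ n D T N" I] j len_gates enc_len lI by simp
qed

lemma vs_in: assumes "v < n" "r < 3" shows "vs ! (3*v + r) = encode_elem (I!v) ! r"
proof -
  have "3*v + r < length (concat (map encode_elem I))" using assms enc_len lI by simp
  thus ?thesis using eval_wires_input enc_nth assms lI by simp
qed

lemma bits_insB:
  assumes i: "i < n"
  shows "agree (set (Lb D T N i)) lab0 (labOf D T N i (map (\<lambda>x. getb (vs ! x)) (insB D T N i)))"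
proof -
  let ?L = "Lb D T N i"
  have Ln: "v < n" if "v \<in> set ?L" for v using ball_range[OF rng i] that by (simp add: Lb_def)
  have "map (\<lambda>x. getb (vs ! x)) (insB D T N i) = concat (map (\<lambda>v. [fst (I!v) \<noteq> Bot, fst (I!v) = Red]) ?L)"
    unfolding insB_def map_concat
    by (rule arg_cong[where f=concat]) (auto intro!: map_cong simp: Ln vs_in[of _ 0, simplified] vs_in[of _ 1, simplified] encode_elem_def)
  hence "decl (map (\<lambda>x. getb (vs ! x)) (insB D T N i)) = map lab0 ?L"
    by (simp add: decl_pairs decode_fst Ln)
  thus ?thesis unfolding agree_def labOf_def by (simp add: map_of_zip_map)
qed

lemma vs_flag:
  assumes t: "t < T" and i: "i < n" and k: "k < D"
  shows "vs ! (3*n + ((t*n+i)*D+k)) = VB (swp N D (iterL N D t lab0) i \<and> slot N D (iterL N D t lab0) i = k)"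
proof -
  define idx where "idx = (t*n+i)*D+k"
  note e = idx_enc[OF t i k, folded idx_def]
  have g: "gates (circ n D T N) ! idx = BoolG (insB D T N i) (Ff D T N t i k)"
    using gates_BG[OF e(1)] e by (simp add: BG_def)
  define bs where "bs = map (\<lambda>x. getb (vs ! x)) (insB D T N i)"
  have ag: "agree (set (Lb D T N i)) lab0 (labOf D T N i bs)" using bits_insB[OF i] by (simp add: bs_def)
  have "set (ball N D (3 + 3*t) i) \<subseteq> set (Lb D T N i)" unfolding Lb_def by (rule ball_mono_le) (use t in simp)
  hence "agree (set (ball N D (3 + 3*t) i)) lab0 (labOf D T N i bs)" using ag agree_mono by blast
  hence "agree (set (ball N D 3 i)) (iterL N D t lab0) (iterL N D t (labOf D T N i bs))" by (rule agree_iter)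
  note l = loc3[OF this]
  have "vs ! (3*n + idx) = VB (Ff D T N t i k bs)" using vs_gate[of idx] e g by (simp add: bs_def)
  thus ?thesis using l by (simp add: Ff_def idx_def)
qed

lemma vs_col:
  assumes i: "i < n"
  shows "vs ! (3*n + MM n D T + i) = VB (iterL N D T lab0 i \<noteq> Bot)"
proof -
  have g: "gates (circ n D T N) ! (MM n D T + i) = BoolG (insB D T N i) (Fc D T N i)"
    using gates_CG[OF i] by (simp add: CG_def)
  define bs where "bs = map (\<lambda>x. getb (vs ! x)) (insB D T N i)"
  have ag: "agree (set (Lb D T N i)) lab0 (labOf D T N i bs)" using bits_insB[OF i] by (simp add: bs_def)
  hence "agree (set (ball N D (0 + 3*T) i)) lab0 (labOf D T N i bs)" by (simp add: Lb_def)
  hence "agree (set (ball N D 0 i)) (iterL N D T lab0) (iterL N D T (labOf D T N i bs))" by (rule agree_iter)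
  hence "iterL N D T lab0 i = iterL N D T (labOf D T N i bs) i" by (simp add: agree_def)
  moreover have "vs ! (3*n + (MM n D T + i)) = VB (Fc D T N i bs)" using vs_gate[of "MM n D T + i"] g i by (simp add: bs_def)
  ultimately show ?thesis by (simp add: Fc_def add.assoc)
qed

abbreviation "Lt t \<equiv> iterL N D t lab0"
abbreviation "Pt t \<equiv> iterP N D t lab0 pay0"

lemma vs_sel_step:
  assumes t: "t < T" and i: "i < n"
    and A: "\<forall>v<n. vs ! (pw n D T t v) = VW (Pt t v)"
  shows "k < D \<Longrightarrow> vs ! (sw n D T t i k) = VW (if swp N D (Lt t) i \<and> slot N D (Lt t) i \<le> k
                                             then Pt t (N i (slot N D (Lt t) i)) else Pt t i)"
proof (induction k)
  case 0
  define idx where "idx = (t*n+i)*D"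
  note e = idx_enc[OF t i 0(1), simplified, folded idx_def]
  have g: "gates (circ n D T N) ! (MM n D T + n + idx) = SelG (3*n + idx) (qw n D T t i 0) (pw n D T t (N i 0))"
    using gates_SG[OF e(1)] e by (simp add: SG_def)
  have "vs ! (sw n D T t i 0) = vs ! (3*n + (MM n D T + n + idx))" using sw_SG[OF t i 0(1)] by (simp add: idx_def)
  also have "\<dots> = eval_gate vs (SelG (3*n + idx) (qw n D T t i 0) (pw n D T t (N i 0)))"
    using vs_gate[of "MM n D T + n + idx"] g e by simp
  finally have "vs ! (sw n D T t i 0) = (if swp N D (Lt t) i \<and> slot N D (Lt t) i = 0 then vs ! (pw n D T t (N i 0)) else vs ! (pw n D T t i))"
    using vs_flag[OF t i 0(1)] by (simp add: qw_def idx_def)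
  thus ?case using A i rng 0 by auto
next
  case (Suc k)
  define idx where "idx = (t*n+i)*D + Suc k"
  note e = idx_enc[OF t i Suc(2), folded idx_def]
  have g: "gates (circ n D T N) ! (MM n D T + n + idx) = SelG (3*n + idx) (qw n D T t i (Suc k)) (pw n D T t (N i (Suc k)))"
    using gates_SG[OF e(1)] e by (simp add: SG_def)
  have "vs ! (sw n D T t i (Suc k)) = vs ! (3*n + (MM n D T + n + idx))" using sw_SG[OF t i Suc(2)] by (simp add: idx_def)
  also have "\<dots> = eval_gate vs (SelG (3*n + idx) (qw n D T t i (Suc k)) (pw n D T t (N i (Suc k))))"
    using vs_gate[of "MM n D T + n + idx"] g e by simp
  finally have "vs ! (sw n D T t i (Suc k)) = (if swp N D (Lt t) i \<and> slot N D (Lt t) i = Suc k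
       then vs ! (pw n D T t (N i (Suc k))) else vs ! (sw n D T t i k))"
    using vs_flag[OF t i Suc(2)] by (simp add: qw_def idx_def)
  moreover have "vs ! (sw n D T t i k) = VW (if swp N D (Lt t) i \<and> slot N D (Lt t) i \<le> k
                                             then Pt t (N i (slot N D (Lt t) i)) else Pt t i)"
    using Suc by simp
  ultimately show ?case using A i rng Suc(2) by (auto simp: le_Suc_eq)
qed

lemma vs_pw: "t \<le> T \<Longrightarrow> v < n \<Longrightarrow> vs ! (pw n D T t v) = VW (Pt t v)"
proof (induction t arbitrary: v)
  case 0
  have "vs ! (3*v + 2) = VW (snd (I!v))" using vs_in[OF 0(2), of 2] by (simp add: encode_elem_def)
  thus ?case by (simp add: pw_def)
next
  case (Suc t)
  have t: "t < T" using Suc by simp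
  have A: "\<forall>v<n. vs ! (pw n D T t v) = VW (Pt t v)" using Suc by simp
  have D0: "D - 1 < D" using D1 by simp
  have "vs ! (pw n D T (Suc t) v) = vs ! (sw n D T t v (D-1))" by (simp add: pw_def)
  also have "\<dots> = VW (if swp N D (Lt t) v \<and> slot N D (Lt t) v \<le> D - 1
                        then Pt t (N v (slot N D (Lt t) v)) else Pt t v)"
    using vs_sel_step[OF t Suc(3) A D0] .
  also have "\<dots> = VW (Pt (Suc t) v)"
    using swp_slot[of N D "Lt t" v] by (auto simp: stepP_def partner_def)
  finally show ?case .
qed

lemma run_ok: "run_circuit (circ n D T N) I = st (iterL N D T lab0) (iterP N D T lab0 pay0) n"
proof (rule nth_equalityI)
  show "length (run_circuit (circ n D T N) I) = length (st (iterL N D T lab0) (iterP N D T lab0 pay0) n)"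
    by (simp add: run_circuit_def circ_def st_def Let_def)
  fix i assume "i < length (run_circuit (circ n D T N) I)"
  hence i: "i < n" by (simp add: run_circuit_def circ_def Let_def)
  have c: "vs ! (3*n + MM n D T + i) = VB (iterL N D T lab0 i \<noteq> Bot)" by (rule vs_col[OF i])
  have r: "vs ! (3*i + 1) = VB (fst (I!i) = Red)" using vs_in[OF i, of 1] by (simp add: encode_elem_def)
  have p: "vs ! (pw n D T T i) = VW (iterP N D T lab0 pay0 i)" using vs_pw[OF _ i] by simp
  have lab: "decode_label (iterL N D T lab0 i \<noteq> Bot) (fst (I!i) = Red) = iterL N D T lab0 i"
    using iterL_cases[of N D T lab0 i] i by (cases "fst (I!i)") (auto simp: decode_label_def)
  show "run_circuit (circ n D T N) I ! i = st (iterL N D T lab0) (iterP N D T lab0 pay0) n ! i"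
    using i c r p lab by (simp add: run_circuit_def circ_def st_def Let_def)
qed

end


lemma Max_ins0_le: "finite S \<Longrightarrow> (\<forall>x\<in>S. x \<le> (b::nat)) \<Longrightarrow> Max (insert 0 S) \<le> b"
  by (simp add: Max_le_iff)

lemma count_concat: "length (filter P (concat xss)) = (\<Sum>xs\<leftarrow>xss. length (filter P xs))"
  by (induction xss) auto

lemma sum_list_upt_ind:
  "(\<Sum>idx\<leftarrow>[0..<M]. (if c + idx = v then 1 else 0::nat)) \<le> 1"
proof -
  have "(\<Sum>idx\<leftarrow>[0..<M]. (if c + idx = v then 1 else 0::nat)) = (\<Sum>idx\<in>{0..<M}. (if idx = v - c \<and> c \<le> v then 1 else 0))"
    by (simp add: sum_set_upt_conv_sum_list_nat[symmetric]) (intro sum.cong, auto)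
  also have "\<dots> \<le> 1"
  proof (cases "c \<le> v")
    case True thus ?thesis by (simp add: sum.delta)
  next
    case False thus ?thesis by simp
  qed
  finally show ?thesis .
qed

context
  fixes n D T :: nat and N :: "nat \<Rightarrow> nat \<Rightarrow> nat"
  assumes D1: "D \<ge> 1" and T1: "T \<ge> 1" and rng: "\<forall>i<n. \<forall>k<D. N i k < n"
begin

abbreviation "C \<equiv> circ n D T N"

lemma nbool: "num_bool_gates C = MM n D T + n"
proof -
  have "filter is_bool_gate (gates C) = map (BG n D T N) [0..<MM n D T] @ map (CG D T N) [0..<n]"
    by (simp add: circ_def BG_def CG_def SG_def filter_map comp_def)
  thus ?thesis by (simp add: num_bool_gates_def)
qed

lemma nsel: "num_sel_gates C = MM n D T"
proof -
  have "filter (\<lambda>g. \<not> is_bool_gate g) (gates C) = map (SG n D T N) [0..<MM n D T]"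
    by (simp add: circ_def BG_def CG_def SG_def filter_map comp_def)
  thus ?thesis by (simp add: num_sel_gates_def)
qed

lemma len_insB: "length (insB D T N i) = 2 * bl D (3*T)"
  unfolding insB_def by (subst concat_const_len[where c=2]) (auto simp: Lb_def length_ball)

lemma fanin: "max_fan_in C \<le> 2 * bl D (3*T) + 3"
  unfolding max_fan_in_def
  by (rule Max_ins0_le) (auto simp: circ_def BG_def CG_def SG_def len_insB)

lemma pw_out: "t \<le> T \<Longrightarrow> v < n \<Longrightarrow> pw n D T t v < 3*n \<or> pw n D T t v \<ge> S0 n D T"
  by (auto simp: pw_def sw_def)

lemma qw_out: "t < T \<Longrightarrow> i < n \<Longrightarrow> qw n D T t i k < 3*n \<or> qw n D T t i k \<ge> S0 n D T"
  using pw_out[of t i] by (auto simp: qw_def sw_def)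

lemma fanout_bool:
  assumes v: "3*n \<le> v" "v < S0 n D T"
  shows "fan_out C v \<le> 2"
proof -
  have ins_B: "length (filter (\<lambda>u. u = v) (gate_ins (BG n D T N idx))) = 0" if "idx < MM n D T" for idx
  proof -
    have "iI n D idx < n" using idx_dec[OF that] by simp
    hence "\<forall>x\<in>set (insB D T N (iI n D idx)). x < 3*n" using insB_props(1)[OF D1 T1 rng] by blast
    thus ?thesis using v by (auto simp: BG_def filter_empty_conv)
  qed
  have ins_C: "length (filter (\<lambda>u. u = v) (gate_ins (CG D T N i))) = 0" if "i < n" for i
  proof -
    have "\<forall>x\<in>set (insB D T N i). x < 3*n" using insB_props(1)[OF D1 T1 rng that] by blast
    thus ?thesis using v by (auto simp: CG_def filter_empty_conv)
  qed
  have ins_S: "length (filter (\<lambda>u. u = v) (gate_ins (SG n D T N idx))) = (if 3*n + idx = v then 1 else 0)" if "idx < MM n D T" for idx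
  proof -
    note d = idx_dec[OF that]
    have nb: "N (iI n D idx) (kI D idx) < n" using rng d by simp
    have "qw n D T (tI n D idx) (iI n D idx) (kI D idx) \<noteq> v" using qw_out[of "tI n D idx" "iI n D idx" "kI D idx"] d v by auto
    moreover have "pw n D T (tI n D idx) (N (iI n D idx) (kI D idx)) \<noteq> v" using pw_out[of "tI n D idx" "N (iI n D idx) (kI D idx)"] d nb v by auto
    ultimately show ?thesis by (simp add: SG_def)
  qed
  have G: "length (filter (\<lambda>u. u = v) (concat (map gate_ins (gates C)))) \<le> 1"
  proof -
    have "length (filter (\<lambda>u. u = v) (concat (map gate_ins (gates C)))) =
      (\<Sum>idx\<leftarrow>[0..<MM n D T]. length (filter (\<lambda>u. u = v) (gate_ins (BG n D T N idx)))) +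
      (\<Sum>i\<leftarrow>[0..<n]. length (filter (\<lambda>u. u = v) (gate_ins (CG D T N i)))) +
      (\<Sum>idx\<leftarrow>[0..<MM n D T]. length (filter (\<lambda>u. u = v) (gate_ins (SG n D T N idx))))"
      by (simp add: circ_def count_concat comp_def)
    also have "\<dots> = (\<Sum>idx\<leftarrow>[0..<MM n D T]. (if 3*n + idx = v then 1 else 0::nat))"
    proof -
      have "(\<Sum>idx\<leftarrow>[0..<MM n D T]. length (filter (\<lambda>u. u = v) (gate_ins (BG n D T N idx)))) = 0"
        using ins_B by (simp add: sum_list_eq_0_iff)
      moreover have "(\<Sum>i\<leftarrow>[0..<n]. length (filter (\<lambda>u. u = v) (gate_ins (CG D T N i)))) = 0"
        using ins_C by (simp add: sum_list_eq_0_iff)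
      moreover have "(\<Sum>idx\<leftarrow>[0..<MM n D T]. length (filter (\<lambda>u. u = v) (gate_ins (SG n D T N idx)))) =
          (\<Sum>idx\<leftarrow>[0..<MM n D T]. (if 3*n + idx = v then 1 else 0::nat))"
        using ins_S by (intro arg_cong[where f=sum_list] map_cong) auto
      ultimately show ?thesis by simp
    qed
    also have "\<dots> \<le> 1" by (rule sum_list_upt_ind)
    finally show ?thesis .
  qed
  have O: "length (filter (\<lambda>u. u = v) (concat (map (\<lambda>(a,b,p). [a,b,p]) (outs C)))) \<le> 1"
  proof -
    have "length (filter (\<lambda>u. u = v) (concat (map (\<lambda>(a,b,p). [a,b,p]) (outs C)))) =
      (\<Sum>i\<leftarrow>[0..<n]. length (filter (\<lambda>u. u = v) [3*n + MM n D T + i, 3*i+1, pw n D T T i]))"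
      by (simp add: circ_def count_concat comp_def)
    also have "\<dots> = (\<Sum>i\<leftarrow>[0..<n]. (if (3*n + MM n D T) + i = v then 1 else 0::nat))"
    proof (intro arg_cong[where f=sum_list] map_cong refl)
      fix i assume "i \<in> set [0..<n]"
      hence i: "i < n" by simp
      have "pw n D T T i \<noteq> v" using pw_out[of T i] i v by auto
      moreover have "3*i+1 \<noteq> v" using i v by auto
      ultimately show "length (filter (\<lambda>u. u = v) [3*n + MM n D T + i, 3*i+1, pw n D T T i]) =
         (if (3*n + MM n D T) + i = v then 1 else 0::nat)" by auto
    qed
    also have "\<dots> \<le> 1" by (rule sum_list_upt_ind)
    finally show ?thesis .
  qed
  show ?thesis using G O unfolding fan_out_def by simp
qed

lemma bool_fanout: "max_bool_fan_out n C \<le> 2"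
  unfolding max_bool_fan_out_def
proof (rule Max_ins0_le)
  show "finite {fan_out C (3*n + k) |k. k < length (gates C) \<and> is_bool_gate (gates C ! k)}" by simp
  show "\<forall>x\<in>{fan_out C (3*n + k) |k. k < length (gates C) \<and> is_bool_gate (gates C ! k)}. x \<le> 2"
  proof clarify
    fix k assume k: "k < length (gates C)" "is_bool_gate (gates C ! k)"
    have "k < MM n D T + n"
    proof (rule ccontr)
      assume "\<not> ?thesis"
      then obtain idx where "k = MM n D T + n + idx" by (metis le_Suc_ex not_less)
      moreover have "idx < MM n D T" using k(1) calculation len_gates by simp
      ultimately show False using k(2) gates_SG by (simp add: SG_def)
    qed
    thus "fan_out C (3*n + k) \<le> 2" by (intro fanout_bool) (auto simp: S0_def)
  qed
qed

end


context
  fixes n D T :: nat and N :: "nat \<Rightarrow> nat \<Rightarrow> nat"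
  assumes D1: "D \<ge> 1" and T1: "T \<ge> 1" and rng: "\<forall>i<n. \<forall>k<D. N i k < n"
begin

abbreviation "ds \<equiv> wire_depths n (circ n D T N)"

lemma ds_len: "length ds = 3*n + 2 * MM n D T + n"
  unfolding wire_depths_def by (simp add: fold_app_len len_gates)

lemma ds_in: "x < 3*n \<Longrightarrow> ds ! x = 0"
proof -
  assume x: "x < 3*n"
  have "take (3*n) ds = replicate (3*n) 0" unfolding wire_depths_def by (subst fold_app_prefix) auto
  thus ?thesis using x by (metis nth_replicate nth_take)
qed

lemma ds_gate:
  assumes j: "j < 2 * MM n D T + n"
  shows "ds ! (3*n + j) = 1 + Max (insert 0 (set (map (\<lambda>i. ds ! i) (gate_ins (gates (circ n D T N) ! j)))))"
proof -
  have "gate_typed (take (3*n + j) (wire_kinds n (circ n D T N))) (gates (circ n D T N) ! j)"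
    using wf[OF D1 T1 rng] j len_gates unfolding wf_circuit_def by auto
  hence ins: "\<forall>x\<in>set (gate_ins (gates (circ n D T N) ! j)). x < 3*n + j" by (rule gate_typed_take)
  have "ds ! (length (replicate (3*n) (0::nat)) + j) =
    1 + Max (insert 0 (set (map (\<lambda>i. take (length (replicate (3*n) (0::nat)) + j) ds ! i) (gate_ins (gates (circ n D T N) ! j)))))"
    unfolding wire_depths_def by (rule fold_app_nth) (use j len_gates in simp)
  moreover have "map (\<lambda>i. take (3*n + j) ds ! i) (gate_ins (gates (circ n D T N) ! j)) =
                 map (\<lambda>i. ds ! i) (gate_ins (gates (circ n D T N) ! j))"
    using ins by (intro map_cong) auto
  ultimately show ?thesis by simp
qed

lemma ds_bool: "j < MM n D T + n \<Longrightarrow> ds ! (3*n + j) \<le> 1"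
proof -
  assume j: "j < MM n D T + n"
  have "\<forall>x\<in>set (gate_ins (gates (circ n D T N) ! j)). x < 3*n"
  proof (cases "j < MM n D T")
    case True
    have "iI n D j < n" using idx_dec[OF True] by simp
    thus ?thesis using gates_BG[OF True] insB_props(1)[OF D1 T1 rng] by (auto simp: BG_def)
  next
    case False
    then obtain i where i: "j = MM n D T + i" "i < n" using j by (metis add_less_cancel_left le_Suc_ex not_less)
    thus ?thesis using gates_CG[OF i(2)] insB_props(1)[OF D1 T1 rng i(2)] by (auto simp: CG_def)
  qed
  hence "Max (insert 0 (set (map (\<lambda>i. ds ! i) (gate_ins (gates (circ n D T N) ! j))))) \<le> 0"
    by (intro Max_ins0_le) (auto simp: ds_in)
  thus ?thesis using ds_gate[of j] j by simp
qed

lemma ds_sw_pw: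
  "t \<le> T \<Longrightarrow> (\<forall>v<n. ds ! (pw n D T t v) \<le> t*(D+1)) \<and>
     (t < T \<longrightarrow> (\<forall>i<n. \<forall>k<D. ds ! (sw n D T t i k) \<le> 2 + t*(D+1) + k))"
proof (induction t)
  case 0
  have A: "\<forall>v<n. ds ! (pw n D T 0 v) \<le> 0" by (auto simp: pw_def ds_in)
  show ?case
  proof (intro conjI impI allI)
    show "\<And>v. v < n \<Longrightarrow> ds ! (pw n D T 0 v) \<le> 0*(D+1)" using A by simp
    fix i k assume i: "i < n" and k: "k < D"
    show "ds ! (sw n D T 0 i k) \<le> 2 + 0*(D+1) + k" using k
    proof (induction k)
      case 0
      define idx where "idx = (0*n+i)*D+0"
      have t0: "0 < T" using T1 by simp
      note e = idx_enc[OF t0 i 0(1), folded idx_def]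
      have "ds ! (sw n D T 0 i 0) = ds ! (3*n + (MM n D T + n + idx))" using sw_SG[OF t0 i 0(1)] by (simp add: idx_def)
      also have "\<dots> = 1 + Max (insert 0 (set (map (\<lambda>i. ds ! i) (gate_ins (SG n D T N idx)))))"
        using ds_gate[of "MM n D T + n + idx"] gates_SG[of idx] e by simp
      also have "\<dots> \<le> 1 + 1"
      proof -
        have "ds ! (3*n + idx) \<le> 1" using ds_bool[of idx] e by simp
        moreover have "ds ! (qw n D T 0 i 0) \<le> 1" using A i by (simp add: qw_def)
        moreover have "ds ! (pw n D T 0 (N i 0)) \<le> 1" using A i rng 0 by simp
        ultimately show ?thesis using e by (simp add: SG_def idx_def Max_le_iff)
      qed
      finally show ?case by simp
    next
      case (Suc k)
      define idx where "idx = (0*n+i)*D+Suc k"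
      have t0: "0 < T" using T1 by simp
      note e = idx_enc[OF t0 i Suc(2), folded idx_def]
      have "ds ! (sw n D T 0 i (Suc k)) = ds ! (3*n + (MM n D T + n + idx))" using sw_SG[OF t0 i Suc(2)] by (simp add: idx_def)
      also have "\<dots> = 1 + Max (insert 0 (set (map (\<lambda>i. ds ! i) (gate_ins (SG n D T N idx)))))"
        using ds_gate[of "MM n D T + n + idx"] gates_SG[of idx] e by simp
      also have "\<dots> \<le> 1 + (1 + Suc k)"
      proof -
        have "ds ! (3*n + idx) \<le> 1" using ds_bool[of idx] e by simp
        moreover have "ds ! (qw n D T 0 i (Suc k)) \<le> 1 + Suc k" using Suc by (simp add: qw_def)
        moreover have "ds ! (pw n D T 0 (N i (Suc k))) \<le> 1" using A i rng Suc(2) by simp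
        ultimately show ?thesis using e by (simp add: SG_def idx_def Max_le_iff)
      qed
      finally show ?case by simp
    qed
  qed
next
  case (Suc t)
  hence IH: "\<forall>v<n. ds ! (pw n D T t v) \<le> t*(D+1)" "\<forall>i<n. \<forall>k<D. ds ! (sw n D T t i k) \<le> 2 + t*(D+1) + k"
    by auto
  have A: "\<forall>v<n. ds ! (pw n D T (Suc t) v) \<le> Suc t*(D+1)"
  proof (intro allI impI)
    fix v assume v: "v < n"
    have "ds ! (pw n D T (Suc t) v) = ds ! (sw n D T t v (D-1))" by (simp add: pw_def)
    also have "\<dots> \<le> 2 + t*(D+1) + (D-1)" using IH(2)[rule_format, OF v, of "D-1"] D1 by simp
    also have "\<dots> = Suc t*(D+1)" using D1 by simp
    finally show "ds ! (pw n D T (Suc t) v) \<le> Suc t*(D+1)" .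
  qed
  show ?case
  proof (intro conjI impI allI)
    show "\<And>v. v < n \<Longrightarrow> ds ! (pw n D T (Suc t) v) \<le> Suc t*(D+1)" using A by simp
    fix i k assume tT: "Suc t < T" and i: "i < n" and k: "k < D"
    show "ds ! (sw n D T (Suc t) i k) \<le> 2 + Suc t*(D+1) + k" using k
    proof (induction k)
      case 0
      define idx where "idx = (Suc t*n+i)*D+0"
      note e = idx_enc[OF tT i 0(1), folded idx_def]
      have "ds ! (sw n D T (Suc t) i 0) = ds ! (3*n + (MM n D T + n + idx))" using sw_SG[OF tT i 0(1)] by (simp add: idx_def)
      also have "\<dots> = 1 + Max (insert 0 (set (map (\<lambda>i. ds ! i) (gate_ins (SG n D T N idx)))))"
        using ds_gate[of "MM n D T + n + idx"] gates_SG[of idx] e by simp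
      also have "\<dots> \<le> 1 + (Suc t*(D+1))"
      proof -
        have "ds ! (3*n + idx) \<le> 1" using ds_bool[of idx] e by simp
        moreover have "ds ! (qw n D T (Suc t) i 0) \<le> Suc t*(D+1)" using A i by (simp add: qw_def)
        moreover have "ds ! (pw n D T (Suc t) (N i 0)) \<le> Suc t*(D+1)" using A i rng 0 by simp
        ultimately show ?thesis using e by (simp add: SG_def idx_def Max_le_iff)
      qed
      finally show ?case by simp
    next
      case (Suc k)
      define idx where "idx = (Suc t*n+i)*D+Suc k"
      note e = idx_enc[OF tT i Suc(2), folded idx_def]
      have "ds ! (sw n D T (Suc t) i (Suc k)) = ds ! (3*n + (MM n D T + n + idx))" using sw_SG[OF tT i Suc(2)] by (simp add: idx_def)
      also have "\<dots> = 1 + Max (insert 0 (set (map (\<lambda>i. ds ! i) (gate_ins (SG n D T N idx)))))"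
        using ds_gate[of "MM n D T + n + idx"] gates_SG[of idx] e by simp
      also have "\<dots> \<le> 1 + (2 + Suc t*(D+1) + k)"
      proof -
        have "ds ! (3*n + idx) \<le> 1" using ds_bool[of idx] e by simp
        moreover have "ds ! (qw n D T (Suc t) i (Suc k)) \<le> 2 + Suc t*(D+1) + k" using Suc by (simp add: qw_def)
        moreover have "ds ! (pw n D T (Suc t) (N i (Suc k))) \<le> Suc t*(D+1)" using A i rng Suc(2) by simp
        ultimately show ?thesis using e by (simp add: SG_def idx_def Max_le_iff)
      qed
      finally show ?case by simp
    qed
  qed
qed

lemma depth_bound: "depth n (circ n D T N) \<le> 2 + T*(D+1)"
  unfolding depth_def
proof (rule Max_ins0_le)
  show "finite (set ds)" by simp
  show "\<forall>x\<in>set ds. x \<le> 2 + T*(D+1)"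
  proof
    fix x assume "x \<in> set ds"
    then obtain w where w: "w < length ds" "x = ds ! w" by (metis in_set_conv_nth)
    show "x \<le> 2 + T*(D+1)"
    proof (cases "w < 3*n + MM n D T + n")
      case True
      show ?thesis
      proof (cases "w < 3*n")
        case True thus ?thesis using w ds_in by simp
      next
        case False
        then obtain j where "w = 3*n + j" "j < MM n D T + n" using \<open>w < 3*n + MM n D T + n\<close>
          by (metis add_less_cancel_left le_Suc_ex not_less add.assoc)
        thus ?thesis using w ds_bool by fastforce
      qed
    next
      case False
      then obtain idx where idx: "w = 3*n + MM n D T + n + idx" by (metis le_Suc_ex not_less)
      hence idxM: "idx < MM n D T" using w ds_len by simp
      note d = idx_dec[OF idxM]
      have "w = sw n D T (tI n D idx) (iI n D idx) (kI D idx)"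
        using idx d(1) by (simp add: sw_def S0_def)
      hence "x \<le> 2 + tI n D idx*(D+1) + kI D idx" using ds_sw_pw[of "tI n D idx"] d w by auto
      also have "\<dots> \<le> 2 + (T-1)*(D+1) + D" using d by (intro add_mono mult_right_mono) auto
      also have "\<dots> \<le> 2 + T*(D+1)" using T1 by (cases T) auto
      finally show ?thesis .
    qed
  qed
qed

end


theorem mainTheorem12:
  shows "\<exists>c::nat. \<forall>n w. \<exists>C. is_approx_swapper n w C \<and>
           max_fan_in C \<le> c \<and> max_bool_fan_out n C \<le> c \<and>
           num_bool_gates C \<le> c * n \<and> num_sel_gates C \<le> c * n \<and> depth n C \<le> c"
proof -
  define D where "D = DD"
  define T where "T = 9 * D"
  have D1: "D \<ge> 1" by (simp add: D_def DD_def dd_def)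
  have T1: "T \<ge> 1" using D1 by (simp add: T_def)
  define c where "c = 2 * bl D (3*T) + 3 + (T*D + 1) + 2 + (2 + T*(D+1))"
  show ?thesis
  proof (intro exI[of _ c] allI)
    fix n w :: nat
    obtain N where g: "graph_ok n D N" using graph_exists unfolding D_def by blast
    have rng: "\<forall>i<n. \<forall>k<D. N i k < n" using g by (simp add: graph_ok_def)
    let ?C = "circ n D T N"
    have sw: "is_approx_swapper n w ?C"
      unfolding is_approx_swapper_def
    proof (intro conjI allI impI)
      show "wf_circuit n ?C" by (rule wf[OF D1 T1 rng])
      fix I :: "elem list" assume "length I = n \<and> (\<forall>e\<in>set I. length (snd e) = w)"
      hence lI: "length I = n" by simp
      show "approx_swap_ok I (run_circuit ?C I)"
        using run_ok[OF D1 T1 rng lI] algo_ok[OF g D1 lI] by (simp add: T_def)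
    qed
    have "max_fan_in ?C \<le> c" using fanin[OF D1 T1 rng] by (simp add: c_def)
    moreover have "max_bool_fan_out n ?C \<le> c" using bool_fanout[OF D1 T1 rng] by (simp add: c_def)
    moreover have "num_bool_gates ?C \<le> c * n"
    proof -
      have "num_bool_gates ?C = (T*D + 1) * n" using nbool[OF D1 T1 rng] by (simp add: MM_def algebra_simps)
      also have "\<dots> \<le> c * n" by (intro mult_right_mono) (auto simp: c_def)
      finally show ?thesis .
    qed
    moreover have "num_sel_gates ?C \<le> c * n"
    proof -
      have "num_sel_gates ?C = (T*D) * n" using nsel[OF D1 T1 rng] by (simp add: MM_def algebra_simps)
      also have "\<dots> \<le> c * n" by (intro mult_right_mono) (auto simp: c_def)
      finally show ?thesis .
    qed
    moreover have "depth n ?C \<le> c"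
    proof -
      have "2 + T*(D+1) \<le> c" unfolding c_def by linarith
      thus ?thesis using depth_bound[OF D1 T1 rng] by linarith
    qed
    ultimately show "\<exists>C. is_approx_swapper n w C \<and> max_fan_in C \<le> c \<and> max_bool_fan_out n C \<le> c \<and>
           num_bool_gates C \<le> c * n \<and> num_sel_gates C \<le> c * n \<and> depth n C \<le> c"
      using sw by blast
  qed
qed


end
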